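(* Consider a fixed time interval $[0,T]$ divided into $L$ time steps, so that the CFL number $\mu=\mu(L)$ is proportional to the step size $T/L$ and hence $\mu(L)\to0$ as $L\to\infty$. Let $\mathbf{T}^{(L)}(\mu)=\mathbf{T}_S(\mu)\,\mathbf{T}_{\mathrm{CGC}}(\mu)$ be the PFASST iteration matrix for $L$ time steps (as defined in the context) with $\mu=\mu(L)$. Then $$\rho\Big(\lim_{L\to\infty}\mathbf{T}^{(L)}(\mu(L))\Big)\ge1.$$
   Context: Fix positive integers $M$ (collocation nodes), $N$ (spatial degrees of freedom), and coarse sizes $\tilde M\le M$, $\tilde N<N$ (coarsening in space). $\mathbf{Q}=(q_{m,j})\in\mathbb{R}^{M\times M}$ with $q_{m,j}=\int_0^{\tau_m}\ell_j(s)\,ds$ is the collocation matrix for the (right) Gauss–Radau nodes $0<\tau_1<\dots<\tau_M=1$ on $[0,1]$; $\mathbf{Q}_\Delta$, $\tilde{\mathbf{Q}}_\Delta$ are lower-triangular weight matrices of simpler quadrature rules on the fine and coarse nodes. $\mathbf{A}\in\mathbb{C}^{N\times N}$, $\tilde{\mathbf{A}}\in\mathbb{C}^{\tilde N\times\tilde N}$. $\mathbf{N}_M$, $\tilde{\mathbf{N}}_{\tilde M}$ are the $M\times M$, $\tilde M\times\tilde M$ matrices with ones in the last column and zeros elsewhere; $\mathbf{H}=\mathbf{N}_M\otimes\mathbf{I}_N$, $\tilde{\mathbf{H}}=\tilde{\mathbf{N}}_{\tilde M}\otimes\mathbf{I}_{\tilde N}$; $\mathbf{E}\in\mathbb{R}^{L\times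 L}$ has ones on the first subdiagonal and zeros elsewhere. $\mathbf{C}=\mathbf{I}_{LMN}-\mu\,\mathbf{I}_L\otimes\mathbf{Q}\otimes\mathbf{A}-\mathbf{E}\otimes\mathbf{H}$, $\hat{\mathbf{P}}=\mathbf{I}_{LMN}-\mu\,\mathbf{I}_L\otimes\mathbf{Q}_\Delta\otimes\mathbf{A}$, $\tilde{\mathbf{P}}=\mathbf{I}_{L\tilde M\tilde N}-\mu\,\mathbf{I}_L\otimes\tilde{\mathbf{Q}}_\Delta\otimes\tilde{\mathbf{A}}-\mathbf{E}\otimes\tilde{\mathbf{H}}$ (both invertible). Restriction $\mathbf{T}_F^C=\mathbf{I}_L\otimes\mathbf{T}_{F,Q}^C\otimes\mathbf{T}_{F,A}^C$ and interpolation $\mathbf{T}_C^F=\mathbf{I}_L\otimes\mathbf{T}_{C,Q}^F\otimes\mathbf{T}_{C,A}^F$ (standard Lagrangian transfer on the nodes and in space, $\mathbf{T}_{F,A}^C\in\mathbb{R}^{\tilde N\times N}$, $\mathbf{T}_{C,A}^F\in\mathbb{R}^{N\times\tilde N}$), with $(\mathbf{E}\otimes\tilde{\mathbf{H}})\mathbf{T}_F^C=\mathbf{T}_F^C(\mathbf{E}\otimes\mathbf{H})$. $\mathbf{T}_S(\mu)=\mathbf{I}_{LMN}-\hat{\mathbf{P}}^{-1}\mathbf{C}$, $\mathbf{T}_{\mathrm{CGC}}(\mu)=\mathbf{I}_{LMN}-\mathbf{T}_C^F\tilde{\mathbf{P}}^{-1}\mathbf{T}_F^C\mathbf{C}$.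 The limit $L\to\infty$ of these block matrices of growing size is understood as an infinite block Toeplitz operator in the sense of Bolten–Rittich: for an infinite block Toeplitz matrix with matrix-valued generating symbol $\hat{\mathbf{T}}(x)$, $x\in[-\pi,\pi]$, its spectral radius is $\operatorname{ess\,sup}_{x\in[-\pi,\pi]}\rho(\hat{\mathbf{T}}(x))$; $\rho$ denotes the spectral radius. *)

theory Defs
  imports "HOL-Probability.Essential_Supremum" "Jordan_Normal_Form.Spectral_Radius"
begin

definition kron :: "'a::times mat \<Rightarrow> 'a mat \<Rightarrow> 'a mat" where
  "kron A B = mat (dim_row A * dim_row B) (dim_col A * dim_col B)
     (\<lambda>(i,j). A $$ (i div dim_row B, j div dim_col B) * B $$ (i mod dim_row B, j mod dim_col B))"

definition cmat :: "real mat \<Rightarrow> complex mat" where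
  "cmat A = map_mat complex_of_real A"

definition minv :: "complex mat \<Rightarrow> complex mat" where
  "minv A = (SOME B. B \<in> carrier_mat (dim_row A) (dim_row A) \<and> A * B = 1\<^sub>m (dim_row A) \<and> B * A = 1\<^sub>m (dim_row A))"

definition lower_tri :: "nat \<Rightarrow> real mat \<Rightarrow> bool" where
  "lower_tri n A \<longleftrightarrow> A \<in> carrier_mat n n \<and> (\<forall>i<n. \<forall>j<n. i < j \<longrightarrow> A $$ (i,j) = 0)"

definition Nlast :: "nat \<Rightarrow> complex mat" where
  "Nlast m = mat m m (\<lambda>(i,j). if j = m - 1 then 1 else 0)"

definition Esub :: "nat \<Rightarrow> complex mat" where
  "Esub L = mat L L (\<lambda>(i,j). if i = j + 1 then 1 else 0)"

definition lagrange_basis :: "nat \<Rightarrow> (nat \<Rightarrow> real) \<Rightarrow> nat \<Rightarrow> real \<Rightarrow> real" where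
  "lagrange_basis M tau j t = (\<Prod>m\<in>{0..<M} - {j}. (t - tau m) / (tau j - tau m))"

definition right_radau_nodes :: "nat \<Rightarrow> (nat \<Rightarrow> real) \<Rightarrow> bool" where
  "right_radau_nodes M tau \<longleftrightarrow> 0 < M \<and> 0 < tau 0 \<and> tau (M - 1) = 1 \<and>
     (\<forall>i j. i < j \<longrightarrow> j < M \<longrightarrow> tau i < tau j) \<and>
     (\<exists>w. \<forall>p :: real poly. degree p \<le> 2 * M - 2 \<longrightarrow>
          (\<Sum>i<M. w i * poly p (tau i)) = integral {0..1} (poly p))"

definition collocation_Q :: "nat \<Rightarrow> (nat \<Rightarrow> real) \<Rightarrow> real mat" where
  "collocation_Q M tau = mat M M (\<lambda>(m,j). integral {0..tau m} (lagrange_basis M tau j))"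

definition lagrange_transfer :: "nat \<Rightarrow> (nat \<Rightarrow> real) \<Rightarrow> nat \<Rightarrow> (nat \<Rightarrow> real) \<Rightarrow> real mat" where
  "lagrange_transfer K sig M tau = mat K M (\<lambda>(i,j). lagrange_basis M tau j (sig i))"

definition Cmat :: "nat \<Rightarrow> nat \<Rightarrow> nat \<Rightarrow> real mat \<Rightarrow> complex mat \<Rightarrow> real \<Rightarrow> complex mat" where
  "Cmat L M N Q A mu = 1\<^sub>m (L*M*N) - (complex_of_real mu) \<cdot>\<^sub>m kron (1\<^sub>m L) (kron (cmat Q) A)
     - kron (Esub L) (kron (Nlast M) (1\<^sub>m N))"

definition Phat :: "nat \<Rightarrow> nat \<Rightarrow> nat \<Rightarrow> real mat \<Rightarrow> complex mat \<Rightarrow> real \<Rightarrow> complex mat" where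
  "Phat L M N QD A mu = 1\<^sub>m (L*M*N) - (complex_of_real mu) \<cdot>\<^sub>m kron (1\<^sub>m L) (kron (cmat QD) A)"

definition Ptilde :: "nat \<Rightarrow> nat \<Rightarrow> nat \<Rightarrow> real mat \<Rightarrow> complex mat \<Rightarrow> real \<Rightarrow> complex mat" where
  "Ptilde L Mt Nt QtD At mu = 1\<^sub>m (L*Mt*Nt) - (complex_of_real mu) \<cdot>\<^sub>m kron (1\<^sub>m L) (kron (cmat QtD) At)
     - kron (Esub L) (kron (Nlast Mt) (1\<^sub>m Nt))"

definition T_S :: "nat \<Rightarrow> nat \<Rightarrow> nat \<Rightarrow> real mat \<Rightarrow> real mat \<Rightarrow> complex mat \<Rightarrow> real \<Rightarrow> complex mat" where
  "T_S L M N Q QD A mu = 1\<^sub>m (L*M*N) - minv (Phat L M N QD A mu) * Cmat L M N Q A mu"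

definition T_CGC :: "nat \<Rightarrow> nat \<Rightarrow> nat \<Rightarrow> nat \<Rightarrow> nat \<Rightarrow> real mat \<Rightarrow> complex mat \<Rightarrow> real mat \<Rightarrow> complex mat
    \<Rightarrow> real mat \<Rightarrow> real mat \<Rightarrow> real mat \<Rightarrow> real mat \<Rightarrow> real \<Rightarrow> complex mat" where
  "T_CGC L M N Mt Nt Q A QtD At TFQC TCQF TFAC TCAF mu =
     1\<^sub>m (L*M*N) - kron (1\<^sub>m L) (kron (cmat TCQF) (cmat TCAF)) * minv (Ptilde L Mt Nt QtD At mu)
       * kron (1\<^sub>m L) (kron (cmat TFQC) (cmat TFAC)) * Cmat L M N Q A mu"

definition blk :: "nat \<Rightarrow> 'a mat \<Rightarrow> nat \<Rightarrow> nat \<Rightarrow> 'a mat" where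
  "blk b X i j = mat b b (\<lambda>(r,s). X $$ (i*b + r, j*b + s))"

text \<open>Blocks T_k (k in Z) of the infinite block Toeplitz operator obtained as the limit
  L \<rightarrow> \<infinity> of a sequence X L of L x L block matrices with b x b blocks:
  T_k is the entrywise limit of block (k,0) (k \<ge> 0), resp. block (0,-k) (k < 0).\<close>
definition toeplitz_limit_blocks :: "nat \<Rightarrow> (nat \<Rightarrow> complex mat) \<Rightarrow> int \<Rightarrow> complex mat" where
  "toeplitz_limit_blocks b X k = mat b b (\<lambda>(r,s).
     lim (\<lambda>L. (if k \<ge> 0 then blk b (X L) (nat k) 0 else blk b (X L) 0 (nat (- k))) $$ (r,s)))"

definition toeplitz_symbol :: "nat \<Rightarrow> (int \<Rightarrow> complex mat) \<Rightarrow> real \<Rightarrow> complex mat" where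
  "toeplitz_symbol b B x = mat b b (\<lambda>(r,s). \<Sum>\<^sub>\<infinity>k::int. B k $$ (r,s) * cis (real_of_int k * x))"

definition toeplitz_spectral_radius :: "nat \<Rightarrow> (int \<Rightarrow> complex mat) \<Rightarrow> ereal" where
  "toeplitz_spectral_radius b B =
     esssup (restrict_space lborel {-pi..pi}) (\<lambda>x. ereal (spectral_radius (toeplitz_symbol b B x)))"

end

theory Submission
  imports Defs
begin

lemma kron_carrier[simp]: "kron A B \<in> carrier_mat (dim_row A * dim_row B) (dim_col A * dim_col B)"
  and kron_dim_row[simp]: "dim_row (kron A B) = dim_row A * dim_row B"
  and kron_dim_col[simp]: "dim_col (kron A B) = dim_col A * dim_col B"
  unfolding kron_def by auto

lemma kron_index[simp]: "i < dim_row A * dim_row B \<Longrightarrow> j < dim_col A * dim_col B \<Longrightarrow>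
  kron A B $$ (i,j) = A $$ (i div dim_row B, j div dim_col B) * B $$ (i mod dim_row B, j mod dim_col B)"
  unfolding kron_def by auto

lemma cmat_dims[simp]: "dim_row (cmat A) = dim_row A" "dim_col (cmat A) = dim_col A"
  unfolding cmat_def by auto

lemma inverse_unique:
  fixes A :: "complex mat"
  assumes A: "A \<in> carrier_mat n n" and B: "B \<in> carrier_mat n n" and AB: "A * B = 1\<^sub>m n"
  shows "minv A = B"
proof -
  have BA: "B * A = 1\<^sub>m n" using mat_mult_left_right_inverse[OF A B AB] .
  let ?P = "\<lambda>B. B \<in> carrier_mat (dim_row A) (dim_row A) \<and> A * B = 1\<^sub>m (dim_row A) \<and> B * A = 1\<^sub>m (dim_row A)"
  have "?P B" using A B AB BA by auto
  hence P: "?P (minv A)" unfolding minv_def by (rule someI)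
  hence C: "minv A \<in> carrier_mat n n" and CA: "minv A * A = 1\<^sub>m n" using A by auto
  have "minv A = minv A * (A * B)" using AB C by simp
  also have "\<dots> = (minv A * A) * B" using A B C by (simp add: assoc_mult_mat)
  also have "\<dots> = B" using CA B by simp
  finally show ?thesis .
qed

lemma minv_props:
  fixes A :: "complex mat"
  assumes A: "A \<in> carrier_mat n n" and inv: "invertible_mat A"
  shows "minv A \<in> carrier_mat n n" "A * minv A = 1\<^sub>m n" "minv A * A = 1\<^sub>m n"
proof -
  from inv obtain B where AB: "A * B = 1\<^sub>m (dim_row A)" and BA: "B * A = 1\<^sub>m (dim_row B)"
    unfolding invertible_mat_def inverts_mat_def by auto
  have "dim_col B = n" using arg_cong[OF AB, of dim_col] A by simp
  moreover have "dim_row B = n" using arg_cong[OF BA, of dim_col] A by simp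
  ultimately have B: "B \<in> carrier_mat n n" by auto
  have "minv A = B" using inverse_unique[OF A B] AB A by simp
  thus "minv A \<in> carrier_mat n n" "A * minv A = 1\<^sub>m n" "minv A * A = 1\<^sub>m n"
    using B AB mat_mult_left_right_inverse[OF A B] A by auto
qed

definition cutz :: "nat \<Rightarrow> nat \<Rightarrow> 'a::zero mat \<Rightarrow> bool" where
  "cutz k1 k2 X \<longleftrightarrow> (\<forall>i j. i < k1 \<longrightarrow> k2 \<le> j \<longrightarrow> j < dim_col X \<longrightarrow> X $$ (i,j) = 0)"

definition trunc :: "nat \<Rightarrow> nat \<Rightarrow> 'a mat \<Rightarrow> 'a mat" where
  "trunc k1 k2 X = mat k1 k2 (\<lambda>(i,j). X $$ (i,j))"

lemma trunc_carrier[simp]: "trunc k1 k2 X \<in> carrier_mat k1 k2"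
  and trunc_dims[simp]: "dim_row (trunc k1 k2 X) = k1" "dim_col (trunc k1 k2 X) = k2"
  unfolding trunc_def by auto

lemma trunc_index[simp]: "i < k1 \<Longrightarrow> j < k2 \<Longrightarrow> trunc k1 k2 X $$ (i,j) = X $$ (i,j)"
  unfolding trunc_def by auto

lemma kron_carrier_mat: "A \<in> carrier_mat a b \<Longrightarrow> B \<in> carrier_mat c d \<Longrightarrow> kron A B \<in> carrier_mat (a*c) (b*d)"
  by (rule carrier_matI) (auto dest: carrier_matD)

lemma cutz_mult:
  fixes A B :: "'a::comm_ring_1 mat"
  assumes A: "A \<in> carrier_mat n1 n2" and B: "B \<in> carrier_mat n2 n3"
    and cA: "cutz k1 k2 A" and cB: "cutz k2 k3 B" and k1: "k1 \<le> n1"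
  shows "cutz k1 k3 (A * B)"
  unfolding cutz_def
proof (intro allI impI)
  fix i j assume i: "i < k1" and j: "k3 \<le> j" and j2: "j < dim_col (A * B)"
  have "(A * B) $$ (i,j) = (\<Sum>l<n2. A $$ (i,l) * B $$ (l,j))"
    using A B i j2 k1 by (auto simp: scalar_prod_def intro!: sum.cong)
  also have "\<dots> = 0"
  proof (rule sum.neutral, intro ballI)
    fix l assume l: "l \<in> {..<n2}"
    show "A $$ (i,l) * B $$ (l,j) = 0"
    proof (cases "l < k2")
      case True thus ?thesis using cB j j2 B A unfolding cutz_def by auto
    next
      case False thus ?thesis using cA i l A unfolding cutz_def by auto
    qed
  qed
  finally show "(A * B) $$ (i,j) = 0" .
qed

lemma cutz_minus:
  fixes A B :: "'a::ab_group_add mat"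
  assumes "A \<in> carrier_mat n1 n2" "B \<in> carrier_mat n1 n2" "cutz k1 k2 A" "cutz k1 k2 B" "k1 \<le> n1"
  shows "cutz k1 k2 (A - B)"
  using assms unfolding cutz_def by auto

lemma cutz_smult:
  fixes A :: "'a::comm_ring_1 mat"
  assumes "A \<in> carrier_mat n1 n2" "cutz k1 k2 A" "k1 \<le> n1"
  shows "cutz k1 k2 (c \<cdot>\<^sub>m A)"
  using assms unfolding cutz_def by auto

lemma cutz_one: "k \<le> n \<Longrightarrow> cutz k k (1\<^sub>m n :: 'a::comm_ring_1 mat)"
  unfolding cutz_def by auto

lemma trunc_mult:
  fixes A B :: "'a::comm_ring_1 mat"
  assumes A: "A \<in> carrier_mat n1 n2" and B: "B \<in> carrier_mat n2 n3"
    and cA: "cutz k1 k2 A" and k: "k1 \<le> n1" "k2 \<le> n2" "k3 \<le> n3"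
  shows "trunc k1 k3 (A * B) = trunc k1 k2 A * trunc k2 k3 B"
proof (rule eq_matI)
  fix i j assume i: "i < dim_row (trunc k1 k2 A * trunc k2 k3 B)" and j: "j < dim_col (trunc k1 k2 A * trunc k2 k3 B)"
  hence i: "i < k1" and j: "j < k3" by auto
  have "trunc k1 k3 (A * B) $$ (i,j) = (\<Sum>l<n2. A $$ (i,l) * B $$ (l,j))"
    using A B i j k by (auto simp: scalar_prod_def intro!: sum.cong)
  also have "\<dots> = (\<Sum>l<k2. A $$ (i,l) * B $$ (l,j))"
    by (rule sum.mono_neutral_right, insert k cA i A, auto simp: cutz_def)
  also have "\<dots> = (trunc k1 k2 A * trunc k2 k3 B) $$ (i,j)"
    using i j by (auto simp: scalar_prod_def intro!: sum.cong)
  finally show "trunc k1 k3 (A * B) $$ (i,j) = (trunc k1 k2 A * trunc k2 k3 B) $$ (i,j)" .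
qed auto

lemma trunc_minus:
  fixes A B :: "'a::ab_group_add mat"
  assumes "A \<in> carrier_mat n1 n2" "B \<in> carrier_mat n1 n2" "k1 \<le> n1" "k2 \<le> n2"
  shows "trunc k1 k2 (A - B) = trunc k1 k2 A - trunc k1 k2 B"
  using assms by (intro eq_matI) auto

lemma trunc_smult:
  fixes A :: "'a::comm_ring_1 mat"
  assumes "A \<in> carrier_mat n1 n2" "k1 \<le> n1" "k2 \<le> n2"
  shows "trunc k1 k2 (c \<cdot>\<^sub>m A) = c \<cdot>\<^sub>m trunc k1 k2 A"
  using assms by (intro eq_matI) auto

lemma trunc_one: "k \<le> n \<Longrightarrow> trunc k k (1\<^sub>m n :: 'a::comm_ring_1 mat) = 1\<^sub>m k"
  by (intro eq_matI) auto

lemma minv_cut: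
  fixes A :: "complex mat"
  assumes A: "A \<in> carrier_mat n n" and inv: "invertible_mat A" and cA: "cutz k k A" and k: "k \<le> n"
  shows "cutz k k (minv A)" "trunc k k (minv A) = minv (trunc k k A)"
proof -
  note B = minv_props[OF A inv]
  let ?B = "minv A" and ?TA = "trunc k k A" and ?TB = "trunc k k (minv A)"
  have "?TA * ?TB = trunc k k (A * ?B)" using trunc_mult[OF A B(1) cA k k k] by simp
  also have "\<dots> = 1\<^sub>m k" using B(2) trunc_one[OF k] by simp
  finally have TT: "?TA * ?TB = 1\<^sub>m k" .
  thus "?TB = minv ?TA" using inverse_unique[of ?TA k ?TB] by simp
  have TT2: "?TB * ?TA = 1\<^sub>m k" using mat_mult_left_right_inverse[OF _ _ TT] by simp
  show "cutz k k ?B" unfolding cutz_def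
  proof (intro allI impI)
    fix i j assume i: "i < k" and j: "k \<le> j" and j2: "j < dim_col ?B"
    hence j2: "j < n" using B by auto
    define Z where "Z = mat k (n - k) (\<lambda>(a,b). ?B $$ (a, k + b))"
    have Z: "Z \<in> carrier_mat k (n - k)" unfolding Z_def by auto
    have "?TA * Z = 0\<^sub>m k (n - k)"
    proof (rule eq_matI)
      fix a c assume a: "a < dim_row (0\<^sub>m k (n - k) :: complex mat)" and c: "c < dim_col (0\<^sub>m k (n - k) :: complex mat)"
      hence a: "a < k" and c: "c < n - k" by auto
      have "(?TA * Z) $$ (a,c) = (\<Sum>l<k. A $$ (a,l) * ?B $$ (l, k + c))"
        using a c k unfolding Z_def by (auto simp: scalar_prod_def intro!: sum.cong)
      also have "\<dots> = (\<Sum>l<n. A $$ (a,l) * ?B $$ (l, k + c))"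
        by (rule sum.mono_neutral_right[symmetric], insert k cA a A, auto simp: cutz_def)
      also have "\<dots> = (A * ?B) $$ (a, k + c)"
        using a c k A B(1) by (auto simp: scalar_prod_def intro!: sum.cong)
      also have "\<dots> = 0" using B(2) a c k by auto
      finally show "(?TA * Z) $$ (a,c) = 0\<^sub>m k (n - k) $$ (a,c)" using a c by simp
    qed (use Z in auto)
    hence "?TB * (?TA * Z) = 0\<^sub>m k (n - k)" by simp
    hence "Z = 0\<^sub>m k (n - k)" using TT2 Z by (simp add: assoc_mult_mat[symmetric, of ?TB k k ?TA k Z])
    hence "Z $$ (i, j - k) = 0" using i j j2 by simp
    thus "?B $$ (i,j) = 0" using i j j2 unfolding Z_def by simp
  qed
qed

lemma trunc_X:
  fixes C Ph Pt P R :: "complex mat"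
  assumes C: "C \<in> carrier_mat n n" and Ph: "Ph \<in> carrier_mat n n" and Pt: "Pt \<in> carrier_mat nt nt"
    and P: "P \<in> carrier_mat n nt" and R: "R \<in> carrier_mat nt n"
    and iPh: "invertible_mat Ph" and iPt: "invertible_mat Pt"
    and cC: "cutz k k C" and cPh: "cutz k k Ph" and cPt: "cutz kt kt Pt" and cP: "cutz k kt P"
    and cR: "cutz kt k R" and k: "k \<le> n" and kt: "kt \<le> nt"
  shows "cutz k k ((1\<^sub>m n - minv Ph * C) * (1\<^sub>m n - P * minv Pt * R * C))"
    "trunc k k ((1\<^sub>m n - minv Ph * C) * (1\<^sub>m n - P * minv Pt * R * C)) =
     (1\<^sub>m k - minv (trunc k k Ph) * trunc k k C) *
     (1\<^sub>m k - trunc k kt P * minv (trunc kt kt Pt) * trunc kt k R * trunc k k C)"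
proof -
  note mPh = minv_props[OF Ph iPh] and mPt = minv_props[OF Pt iPt]
  note cmPh = minv_cut[OF Ph iPh cPh k] and cmPt = minv_cut[OF Pt iPt cPt kt]
  have T1: "minv Ph * C \<in> carrier_mat n n" using mPh C by auto
  have cT1: "cutz k k (minv Ph * C)" by (rule cutz_mult[OF mPh(1) C cmPh(1) cC k])
  have tT1: "trunc k k (minv Ph * C) = minv (trunc k k Ph) * trunc k k C"
    using trunc_mult[OF mPh(1) C cmPh(1) k k k] cmPh(2) by simp
  have U: "1\<^sub>m n - minv Ph * C \<in> carrier_mat n n" using T1 by (rule minus_carrier_mat)
  have cU: "cutz k k (1\<^sub>m n - minv Ph * C)" by (rule cutz_minus[OF _ T1 cutz_one[OF k] cT1 k], auto)
  have tU: "trunc k k (1\<^sub>m n - minv Ph * C) = 1\<^sub>m k - minv (trunc k k Ph) * trunc k k C"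
    by (simp add: trunc_minus[OF _ T1 k k] tT1 trunc_one[OF k])
  have V1: "P * minv Pt \<in> carrier_mat n nt" using P mPt by auto
  have cV1: "cutz k kt (P * minv Pt)" by (rule cutz_mult[OF P mPt(1) cP cmPt(1) k])
  have tV1: "trunc k kt (P * minv Pt) = trunc k kt P * minv (trunc kt kt Pt)"
    using trunc_mult[OF P mPt(1) cP k kt kt] cmPt(2) by simp
  have V2: "P * minv Pt * R \<in> carrier_mat n n" using V1 R by auto
  have cV2: "cutz k k (P * minv Pt * R)" by (rule cutz_mult[OF V1 R cV1 cR k])
  have tV2: "trunc k k (P * minv Pt * R) = trunc k kt P * minv (trunc kt kt Pt) * trunc kt k R"
    using trunc_mult[OF V1 R cV1 k kt k] tV1 by simp
  have V3: "P * minv Pt * R * C \<in> carrier_mat n n" using V2 C by auto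
  have cV3: "cutz k k (P * minv Pt * R * C)" by (rule cutz_mult[OF V2 C cV2 cC k])
  have tV3: "trunc k k (P * minv Pt * R * C) = trunc k kt P * minv (trunc kt kt Pt) * trunc kt k R * trunc k k C"
    using trunc_mult[OF V2 C cV2 k k k] tV2 by simp
  have W: "1\<^sub>m n - P * minv Pt * R * C \<in> carrier_mat n n" using V3 by (rule minus_carrier_mat)
  have cW: "cutz k k (1\<^sub>m n - P * minv Pt * R * C)" by (rule cutz_minus[OF _ V3 cutz_one[OF k] cV3 k], auto)
  have tW: "trunc k k (1\<^sub>m n - P * minv Pt * R * C) = 1\<^sub>m k - trunc k kt P * minv (trunc kt kt Pt) * trunc kt k R * trunc k k C"
    by (simp add: trunc_minus[OF _ V3 k k] tV3 trunc_one[OF k])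
  show "cutz k k ((1\<^sub>m n - minv Ph * C) * (1\<^sub>m n - P * minv Pt * R * C))"
    by (rule cutz_mult[OF U W cU cW k])
  show "trunc k k ((1\<^sub>m n - minv Ph * C) * (1\<^sub>m n - P * minv Pt * R * C)) =
     (1\<^sub>m k - minv (trunc k k Ph) * trunc k k C) *
     (1\<^sub>m k - trunc k kt P * minv (trunc kt kt Pt) * trunc kt k R * trunc k k C)"
    using trunc_mult[OF U W cU k k k] tU tW by simp
qed

lemma div_lt_K: "i < K * r \<Longrightarrow> i div r < (K::nat)"
  by (simp add: less_mult_imp_div_less)

lemma div_ge_K: "K * c \<le> j \<Longrightarrow> 0 < c \<Longrightarrow> K \<le> j div (c::nat)"
  by (metis div_le_mono nonzero_mult_div_cancel_right less_not_refl2)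

lemma Nlast_carrier[simp]: "Nlast m \<in> carrier_mat m m" "dim_row (Nlast m) = m" "dim_col (Nlast m) = m"
  unfolding Nlast_def by auto
lemma Esub_carrier[simp]: "Esub m \<in> carrier_mat m m" "dim_row (Esub m) = m" "dim_col (Esub m) = m"
  unfolding Esub_def by auto

lemma kron_one_cut:
  fixes Y :: "complex mat"
  assumes Y: "Y \<in> carrier_mat r c" and KL: "K \<le> L"
  shows "cutz (K * r) (K * c) (kron (1\<^sub>m L) Y)"
    "trunc (K * r) (K * c) (kron (1\<^sub>m L) Y) = kron (1\<^sub>m K) Y"
proof -
  show "cutz (K * r) (K * c) (kron (1\<^sub>m L) Y)" unfolding cutz_def
  proof (intro allI impI)
    fix i j assume i: "i < K * r" and j: "K * c \<le> j" and j2: "j < dim_col (kron (1\<^sub>m L) Y)"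
    have c: "0 < c" using j2 Y by (cases c, auto)
    have r: "0 < r" using i by (cases r, auto)
    have "i div r < K" using div_lt_K[OF i] .
    moreover have "K \<le> j div c" using div_ge_K[OF j c] .
    moreover have "j div c < L" using j2 Y by (simp add: div_lt_K)
    moreover have "i < L * r" using i KL by (meson less_le_trans mult_le_mono1)
    ultimately show "kron (1\<^sub>m L) Y $$ (i,j) = 0" using j2 Y by auto
  qed
  show "trunc (K * r) (K * c) (kron (1\<^sub>m L) Y) = kron (1\<^sub>m K) Y"
  proof (rule eq_matI)
    fix i j assume i: "i < dim_row (kron (1\<^sub>m K) Y)" and j: "j < dim_col (kron (1\<^sub>m K) Y)"
    hence i: "i < K * r" and j: "j < K * c" using Y by auto
    have "i < L * r" using i KL by (meson less_le_trans mult_le_mono1)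
    moreover have "j < L * c" using j KL by (meson less_le_trans mult_le_mono1)
    moreover have "i div r < K" "j div c < K" using div_lt_K i j by auto
    ultimately show "trunc (K * r) (K * c) (kron (1\<^sub>m L) Y) $$ (i,j) = kron (1\<^sub>m K) Y $$ (i,j)"
      using i j Y KL by auto
  qed (use Y in auto)
qed

lemma kron_E_cut:
  fixes Y :: "complex mat"
  assumes Y: "Y \<in> carrier_mat r r" and KL: "K \<le> L"
  shows "cutz (K * r) (K * r) (kron (Esub L) Y)"
    "trunc (K * r) (K * r) (kron (Esub L) Y) = kron (Esub K) Y"
proof -
  show "cutz (K * r) (K * r) (kron (Esub L) Y)" unfolding cutz_def
  proof (intro allI impI)
    fix i j assume i: "i < K * r" and j: "K * r \<le> j" and j2: "j < dim_col (kron (Esub L) Y)"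
    have r: "0 < r" using i by (cases r, auto)
    have "i div r < K" using div_lt_K[OF i] .
    moreover have "K \<le> j div r" using div_ge_K[OF j r] .
    moreover have "j div r < L" using j2 Y by (simp add: div_lt_K)
    moreover have "i < L * r" using i KL by (meson less_le_trans mult_le_mono1)
    ultimately show "kron (Esub L) Y $$ (i,j) = 0" using j2 Y by (auto simp: Esub_def)
  qed
  show "trunc (K * r) (K * r) (kron (Esub L) Y) = kron (Esub K) Y"
  proof (rule eq_matI)
    fix i j assume i: "i < dim_row (kron (Esub K) Y)" and j: "j < dim_col (kron (Esub K) Y)"
    hence i: "i < K * r" and j: "j < K * r" using Y by auto
    have "i < L * r" using i KL by (meson less_le_trans mult_le_mono1)
    moreover have "j < L * r" using j KL by (meson less_le_trans mult_le_mono1)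
    moreover have "i div r < K" "j div r < K" using div_lt_K i j by auto
    ultimately show "trunc (K * r) (K * r) (kron (Esub L) Y) $$ (i,j) = kron (Esub K) Y $$ (i,j)"
      using i j Y KL by (auto simp: Esub_def)
  qed (use Y in auto)
qed

lemma cmat_carrier[simp]: "A \<in> carrier_mat n m \<Longrightarrow> cmat A \<in> carrier_mat n m"
  unfolding cmat_def by auto

lemma Cmat_cut:
  assumes Q: "Q \<in> carrier_mat M M" and A: "A \<in> carrier_mat N N" and KL: "K \<le> L"
  shows "Cmat L M N Q A mu \<in> carrier_mat (L*M*N) (L*M*N)"
    "cutz (K*M*N) (K*M*N) (Cmat L M N Q A mu)"
    "trunc (K*M*N) (K*M*N) (Cmat L M N Q A mu) = Cmat K M N Q A mu"
proof -
  have Y1: "kron (cmat Q) A \<in> carrier_mat (M*N) (M*N)" using Q A by (metis kron_carrier cmat_carrier carrier_matD)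
  have Y2: "kron (Nlast M) (1\<^sub>m N) \<in> carrier_mat (M*N) (M*N)" by (metis kron_carrier Nlast_carrier one_carrier_mat carrier_matD)
  note a1 = kron_one_cut[OF Y1 KL] and a2 = kron_E_cut[OF Y2 KL]
  have c1: "kron (1\<^sub>m L) (kron (cmat Q) A) \<in> carrier_mat (L*(M*N)) (L*(M*N))" using Y1 by (metis kron_carrier one_carrier_mat carrier_matD)
  have c2: "kron (Esub L) (kron (Nlast M) (1\<^sub>m N)) \<in> carrier_mat (L*(M*N)) (L*(M*N))" using Y2 by (metis kron_carrier Esub_carrier carrier_matD)
  have k: "K*(M*N) \<le> L*(M*N)" using KL by simp
  show "Cmat L M N Q A mu \<in> carrier_mat (L*M*N) (L*M*N)" unfolding Cmat_def mult.assoc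
    by (rule minus_carrier_mat[OF c2])
  show "cutz (K*M*N) (K*M*N) (Cmat L M N Q A mu)"
  proof -
    have d1: "1\<^sub>m (L*(M*N)) - complex_of_real mu \<cdot>\<^sub>m kron (1\<^sub>m L) (kron (cmat Q) A) \<in> carrier_mat (L*(M*N)) (L*(M*N))"
      using c1 by (intro minus_carrier_mat smult_carrier_mat)
    have "cutz (K*(M*N)) (K*(M*N)) (1\<^sub>m (L*(M*N)) - complex_of_real mu \<cdot>\<^sub>m kron (1\<^sub>m L) (kron (cmat Q) A))"
      by (rule cutz_minus[OF one_carrier_mat smult_carrier_mat[OF c1] cutz_one[OF k] cutz_smult[OF c1 a1(1) k] k])
    from cutz_minus[OF d1 c2 this a2(1) k] show ?thesis by (simp only: Cmat_def mult.assoc)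
  qed
  show "trunc (K*M*N) (K*M*N) (Cmat L M N Q A mu) = Cmat K M N Q A mu"
  proof -
    have d1: "1\<^sub>m (L*(M*N)) - complex_of_real mu \<cdot>\<^sub>m kron (1\<^sub>m L) (kron (cmat Q) A) \<in> carrier_mat (L*(M*N)) (L*(M*N))"
      using c1 by (intro minus_carrier_mat smult_carrier_mat)
    show ?thesis
      unfolding Cmat_def mult.assoc trunc_minus[OF d1 c2 k k] trunc_minus[OF one_carrier_mat smult_carrier_mat[OF c1] k k]
        trunc_smult[OF c1 k k] trunc_one[OF k] a1(2) a2(2) ..
  qed
qed

lemma Phat_cut:
  assumes Q: "Q \<in> carrier_mat M M" and A: "A \<in> carrier_mat N N" and KL: "K \<le> L"
  shows "Phat L M N Q A mu \<in> carrier_mat (L*M*N) (L*M*N)"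
    "cutz (K*M*N) (K*M*N) (Phat L M N Q A mu)"
    "trunc (K*M*N) (K*M*N) (Phat L M N Q A mu) = Phat K M N Q A mu"
proof -
  have Y1: "kron (cmat Q) A \<in> carrier_mat (M*N) (M*N)" using Q A by (metis kron_carrier cmat_carrier carrier_matD)
  note a1 = kron_one_cut[OF Y1 KL]
  have c1: "kron (1\<^sub>m L) (kron (cmat Q) A) \<in> carrier_mat (L*(M*N)) (L*(M*N))" using Y1 by (metis kron_carrier one_carrier_mat carrier_matD)
  have k: "K*(M*N) \<le> L*(M*N)" using KL by simp
  show "Phat L M N Q A mu \<in> carrier_mat (L*M*N) (L*M*N)" unfolding Phat_def mult.assoc
    using c1 by (intro minus_carrier_mat smult_carrier_mat)
  show "cutz (K*M*N) (K*M*N) (Phat L M N Q A mu)" unfolding Phat_def mult.assoc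
    by (rule cutz_minus[OF one_carrier_mat smult_carrier_mat[OF c1] cutz_one[OF k] cutz_smult[OF c1 a1(1) k] k])
  show "trunc (K*M*N) (K*M*N) (Phat L M N Q A mu) = Phat K M N Q A mu" unfolding Phat_def mult.assoc
    unfolding trunc_minus[OF one_carrier_mat smult_carrier_mat[OF c1] k k]
        trunc_smult[OF c1 k k] trunc_one[OF k] a1(2) ..
qed

lemma Ptilde_cut:
  assumes Q: "Q \<in> carrier_mat M M" and A: "A \<in> carrier_mat N N" and KL: "K \<le> L"
  shows "Ptilde L M N Q A mu \<in> carrier_mat (L*M*N) (L*M*N)"
    "cutz (K*M*N) (K*M*N) (Ptilde L M N Q A mu)"
    "trunc (K*M*N) (K*M*N) (Ptilde L M N Q A mu) = Ptilde K M N Q A mu"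
  using Cmat_cut[OF Q A KL, of mu] unfolding Cmat_def Ptilde_def by auto

lemma kron_one_cut2:
  fixes Y :: "complex mat"
  assumes Y: "Y \<in> carrier_mat (a*b) (c*d)" and KL: "K \<le> L"
  shows "kron (1\<^sub>m L) Y \<in> carrier_mat (L*a*b) (L*c*d)"
    "cutz (K*a*b) (K*c*d) (kron (1\<^sub>m L) Y)"
    "trunc (K*a*b) (K*c*d) (kron (1\<^sub>m L) Y) = kron (1\<^sub>m K) Y"
  using kron_one_cut[OF Y KL] Y by (auto simp: mult.assoc)

definition mconv :: "(nat \<Rightarrow> complex mat) \<Rightarrow> complex mat \<Rightarrow> bool" where
  "mconv F G \<longleftrightarrow> eventually (\<lambda>L. F L \<in> carrier_mat (dim_row G) (dim_col G)) sequentially \<and>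
     (\<forall>i<dim_row G. \<forall>j<dim_col G. ((\<lambda>L. F L $$ (i,j)) \<longlongrightarrow> G $$ (i,j)) sequentially)"

lemma mconvD: "mconv F G \<Longrightarrow> eventually (\<lambda>L. F L \<in> carrier_mat (dim_row G) (dim_col G)) sequentially"
  "mconv F G \<Longrightarrow> i < dim_row G \<Longrightarrow> j < dim_col G \<Longrightarrow> ((\<lambda>L. F L $$ (i,j)) \<longlongrightarrow> G $$ (i,j)) sequentially"
  unfolding mconv_def by auto

lemma mconv_cong: "mconv F G \<Longrightarrow> eventually (\<lambda>L. F L = F' L) sequentially \<Longrightarrow> mconv F' G"
  unfolding mconv_def
proof (intro conjI allI impI, goal_cases)
  case 1 thus ?case by (auto elim: eventually_elim2)
next
  case (2 i j)
  hence t: "((\<lambda>L. F L $$ (i,j)) \<longlongrightarrow> G $$ (i,j)) sequentially" by auto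
  have "eventually (\<lambda>L. F L $$ (i,j) = F' L $$ (i,j)) sequentially" using 2 by (auto elim: eventually_mono)
  from Lim_transform_eventually[OF t this] show ?case .
qed

lemma mconv_const: "mconv (\<lambda>_. G) G"
  unfolding mconv_def by auto

lemma mconv_minus:
  assumes "mconv F G" "mconv F' G'" "G \<in> carrier_mat n m" "G' \<in> carrier_mat n m"
  shows "mconv (\<lambda>L. F L - F' L) (G - G')"
  unfolding mconv_def
proof (intro conjI allI impI)
  have ev: "eventually (\<lambda>L. F L \<in> carrier_mat n m \<and> F' L \<in> carrier_mat n m) sequentially"
    using eventually_conj[OF mconvD(1)[OF assms(1)] mconvD(1)[OF assms(2)]] assms(3,4) by auto
  thus "\<forall>\<^sub>F L in sequentially. F L - F' L \<in> carrier_mat (dim_row (G - G')) (dim_col (G - G'))"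
    using assms(3,4) by (auto elim!: eventually_mono)
  fix i j assume i: "i < dim_row (G - G')" and j: "j < dim_col (G - G')"
  hence i: "i < n" and j: "j < m" using assms by auto
  have "((\<lambda>L. F L $$ (i,j) - F' L $$ (i,j)) \<longlongrightarrow> G $$ (i,j) - G' $$ (i,j)) sequentially"
    using mconvD(2)[OF assms(1)] mconvD(2)[OF assms(2)] i j assms(3,4) by (intro tendsto_diff) auto
  moreover have "eventually (\<lambda>L. F L $$ (i,j) - F' L $$ (i,j) = (F L - F' L) $$ (i,j)) sequentially"
    using ev i j by (auto elim!: eventually_mono)
  ultimately show "((\<lambda>L. (F L - F' L) $$ (i,j)) \<longlongrightarrow> (G - G') $$ (i,j)) sequentially"
    using i j assms(3,4) by (auto elim!: Lim_transform_eventually)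
qed

lemma mconv_smult:
  assumes "mconv F G" "(a \<longlongrightarrow> a0) sequentially"
  shows "mconv (\<lambda>L. a L \<cdot>\<^sub>m F L) (a0 \<cdot>\<^sub>m G)"
  unfolding mconv_def
proof (intro conjI allI impI)
  have ev: "eventually (\<lambda>L. F L \<in> carrier_mat (dim_row G) (dim_col G)) sequentially" using mconvD(1)[OF assms(1)] .
  thus "\<forall>\<^sub>F L in sequentially. a L \<cdot>\<^sub>m F L \<in> carrier_mat (dim_row (a0 \<cdot>\<^sub>m G)) (dim_col (a0 \<cdot>\<^sub>m G))"
    by (auto elim!: eventually_mono)
  fix i j assume i: "i < dim_row (a0 \<cdot>\<^sub>m G)" and j: "j < dim_col (a0 \<cdot>\<^sub>m G)"
  hence i: "i < dim_row G" and j: "j < dim_col G" by auto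
  have "((\<lambda>L. a L * F L $$ (i,j)) \<longlongrightarrow> a0 * G $$ (i,j)) sequentially"
    using mconvD(2)[OF assms(1) i j] assms(2) by (intro tendsto_mult) auto
  moreover have "eventually (\<lambda>L. a L * F L $$ (i,j) = (a L \<cdot>\<^sub>m F L) $$ (i,j)) sequentially"
    using ev i j by (auto elim!: eventually_mono)
  ultimately show "((\<lambda>L. (a L \<cdot>\<^sub>m F L) $$ (i,j)) \<longlongrightarrow> (a0 \<cdot>\<^sub>m G) $$ (i,j)) sequentially"
    using i j by (auto elim!: Lim_transform_eventually)
qed

lemma mconv_mult:
  assumes "mconv F G" "mconv F' G'" "G \<in> carrier_mat n k" "G' \<in> carrier_mat k m"
  shows "mconv (\<lambda>L. F L * F' L) (G * G')"
  unfolding mconv_def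
proof (intro conjI allI impI)
  have ev: "eventually (\<lambda>L. F L \<in> carrier_mat n k \<and> F' L \<in> carrier_mat k m) sequentially"
    using eventually_conj[OF mconvD(1)[OF assms(1)] mconvD(1)[OF assms(2)]] assms(3,4) by auto
  thus "\<forall>\<^sub>F L in sequentially. F L * F' L \<in> carrier_mat (dim_row (G * G')) (dim_col (G * G'))"
    using assms(3,4) by (auto elim!: eventually_mono)
  fix i j assume i: "i < dim_row (G * G')" and j: "j < dim_col (G * G')"
  hence i: "i < n" and j: "j < m" using assms by auto
  have "((\<lambda>L. \<Sum>l<k. F L $$ (i,l) * F' L $$ (l,j)) \<longlongrightarrow> (\<Sum>l<k. G $$ (i,l) * G' $$ (l,j))) sequentially"
    using mconvD(2)[OF assms(1)] mconvD(2)[OF assms(2)] i j assms(3,4)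
    by (intro tendsto_sum tendsto_mult) auto
  moreover have "eventually (\<lambda>L. (\<Sum>l<k. F L $$ (i,l) * F' L $$ (l,j)) = (F L * F' L) $$ (i,j)) sequentially"
    using ev i j by (auto elim!: eventually_mono simp: scalar_prod_def intro!: sum.cong)
  moreover have "(\<Sum>l<k. G $$ (i,l) * G' $$ (l,j)) = (G * G') $$ (i,j)"
    using i j assms(3,4) by (auto simp: scalar_prod_def intro!: sum.cong)
  ultimately show "((\<lambda>L. (F L * F' L) $$ (i,j)) \<longlongrightarrow> (G * G') $$ (i,j)) sequentially"
    by (auto elim!: Lim_transform_eventually)
qed

lemma mconv_det:
  assumes "mconv F G" "G \<in> carrier_mat n n"
  shows "((\<lambda>L. det (F L)) \<longlongrightarrow> det G) sequentially"
proof -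
  have ev: "eventually (\<lambda>L. F L \<in> carrier_mat n n) sequentially" using mconvD(1)[OF assms(1)] assms(2) by auto
  have "((\<lambda>L. \<Sum>p \<in> {p. p permutes {0..<n}}. signof p * (\<Prod>i = 0..<n. F L $$ (i, p i))) \<longlongrightarrow>
        (\<Sum>p \<in> {p. p permutes {0..<n}}. signof p * (\<Prod>i = 0..<n. G $$ (i, p i)))) sequentially"
  proof (intro tendsto_sum tendsto_mult tendsto_const tendsto_prod)
    fix p i assume p: "p \<in> {p. p permutes {0..<n}}" and i: "i \<in> {0..<n}"
    hence "p i < n" by (auto simp: permutes_in_image)
    thus "((\<lambda>L. F L $$ (i, p i)) \<longlongrightarrow> G $$ (i, p i)) sequentially"
      using mconvD(2)[OF assms(1)] i assms(2) by auto
  qed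
  thus ?thesis using ev assms(2) by (auto simp: det_def' elim!: Lim_transform_eventually elim: eventually_mono)
qed

lemma mconv_mat_delete:
  assumes "mconv F G"
  shows "mconv (\<lambda>L. mat_delete (F L) a b) (mat_delete G a b)"
  unfolding mconv_def
proof (intro conjI allI impI)
  have ev: "eventually (\<lambda>L. F L \<in> carrier_mat (dim_row G) (dim_col G)) sequentially" using mconvD(1)[OF assms(1)] .
  thus "\<forall>\<^sub>F L in sequentially. mat_delete (F L) a b \<in> carrier_mat (dim_row (mat_delete G a b)) (dim_col (mat_delete G a b))"
    by (auto elim!: eventually_mono)
  fix i j assume i: "i < dim_row (mat_delete G a b)" and j: "j < dim_col (mat_delete G a b)"
  let ?i = "if i < a then i else Suc i" and ?j = "if j < b then j else Suc j"
  have i': "?i < dim_row G" and j': "?j < dim_col G" using i j by auto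
  have "((\<lambda>L. F L $$ (?i,?j)) \<longlongrightarrow> G $$ (?i,?j)) sequentially" using mconvD(2)[OF assms(1) i' j'] .
  moreover have "eventually (\<lambda>L. F L $$ (?i,?j) = mat_delete (F L) a b $$ (i,j)) sequentially"
    using ev i j by (auto elim!: eventually_mono simp: mat_delete_def)
  moreover have "G $$ (?i,?j) = mat_delete G a b $$ (i,j)" using i j by (auto simp: mat_delete_def)
  ultimately show "((\<lambda>L. mat_delete (F L) a b $$ (i,j)) \<longlongrightarrow> mat_delete G a b $$ (i,j)) sequentially"
    by (auto elim!: Lim_transform_eventually)
qed

lemma mconv_adj:
  assumes "mconv F G" "G \<in> carrier_mat n n"
  shows "mconv (\<lambda>L. adj_mat (F L)) (adj_mat G)"
  unfolding mconv_def
proof (intro conjI allI impI)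
  have ev: "eventually (\<lambda>L. F L \<in> carrier_mat n n) sequentially" using mconvD(1)[OF assms(1)] assms(2) by auto
  thus "\<forall>\<^sub>F L in sequentially. adj_mat (F L) \<in> carrier_mat (dim_row (adj_mat G)) (dim_col (adj_mat G))"
    using assms(2) by (auto elim!: eventually_mono simp: adj_mat_def)
  fix i j assume i: "i < dim_row (adj_mat G)" and j: "j < dim_col (adj_mat G)"
  hence i: "i < n" and j: "j < n" using assms(2) by (auto simp: adj_mat_def)
  have md: "mat_delete G j i \<in> carrier_mat (n-1) (n-1)" using mat_delete_carrier[OF assms(2)] .
  have "((\<lambda>L. (-1)^(j+i) * det (mat_delete (F L) j i)) \<longlongrightarrow> (-1)^(j+i) * det (mat_delete G j i)) sequentially"
    by (intro tendsto_mult tendsto_const mconv_det[OF mconv_mat_delete[OF assms(1)] md])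
  moreover have "eventually (\<lambda>L. (-1)^(j+i) * det (mat_delete (F L) j i) = adj_mat (F L) $$ (i,j)) sequentially"
    using ev i j by (auto elim!: eventually_mono simp: adj_mat_def cofactor_def)
  moreover have "(-1)^(j+i) * det (mat_delete G j i) = adj_mat G $$ (i,j)"
    using i j assms(2) by (auto simp: adj_mat_def cofactor_def)
  ultimately show "((\<lambda>L. adj_mat (F L) $$ (i,j)) \<longlongrightarrow> adj_mat G $$ (i,j)) sequentially"
    by (auto elim!: Lim_transform_eventually)
qed

lemma minv_adj:
  fixes A :: "complex mat"
  assumes A: "A \<in> carrier_mat n n" and d: "det A \<noteq> 0"
  shows "minv A = (1 / det A) \<cdot>\<^sub>m adj_mat A"
proof (rule inverse_unique[OF A])
  show "(1 / det A) \<cdot>\<^sub>m adj_mat A \<in> carrier_mat n n" using adj_mat(1)[OF A] by auto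
  have "A * ((1 / det A) \<cdot>\<^sub>m adj_mat A) = (1 / det A) \<cdot>\<^sub>m (A * adj_mat A)"
    using mult_smult_distrib[OF A adj_mat(1)[OF A]] .
  also have "\<dots> = (1 / det A) \<cdot>\<^sub>m (det A \<cdot>\<^sub>m 1\<^sub>m n)" using adj_mat(2)[OF A] by simp
  also have "\<dots> = 1\<^sub>m n" using d by (intro eq_matI) auto
  finally show "A * ((1 / det A) \<cdot>\<^sub>m adj_mat A) = 1\<^sub>m n" .
qed

lemma mconv_minv:
  assumes F: "mconv F G" and G: "G \<in> carrier_mat n n" and d: "det G \<noteq> 0"
  shows "mconv (\<lambda>L. minv (F L)) (minv G)"
proof -
  have ev: "eventually (\<lambda>L. F L \<in> carrier_mat n n) sequentially" using mconvD(1)[OF F] G by auto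
  have dt: "((\<lambda>L. det (F L)) \<longlongrightarrow> det G) sequentially" by (rule mconv_det[OF F G])
  have ev2: "eventually (\<lambda>L. det (F L) \<noteq> 0) sequentially" by (rule tendsto_imp_eventually_ne[OF dt d])
  have "mconv (\<lambda>L. (1 / det (F L)) \<cdot>\<^sub>m adj_mat (F L)) ((1 / det G) \<cdot>\<^sub>m adj_mat G)"
    by (intro mconv_smult mconv_adj[OF F G] tendsto_divide tendsto_const dt d)
  hence "mconv (\<lambda>L. (1 / det (F L)) \<cdot>\<^sub>m adj_mat (F L)) (minv G)" using minv_adj[OF G d] by simp
  thus ?thesis
    by (rule mconv_cong, insert eventually_conj[OF ev ev2], auto elim!: eventually_mono simp: minv_adj)
qed

lemma minv_carrier_det: assumes A: "A \<in> carrier_mat n n" and d: "det A \<noteq> 0" shows "minv A \<in> carrier_mat n n"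
  unfolding minv_adj[OF A d] using adj_mat(1)[OF A] by (rule smult_carrier_mat)


lemma mconv_affine:
  assumes mu: "(mu \<longlongrightarrow> 0) sequentially" and Y: "Y \<in> carrier_mat n n" and Z: "Z \<in> carrier_mat n n"
  shows "mconv (\<lambda>L. 1\<^sub>m n - complex_of_real (mu L) \<cdot>\<^sub>m Y) (1\<^sub>m n - complex_of_real 0 \<cdot>\<^sub>m Y)"
    "mconv (\<lambda>L. 1\<^sub>m n - complex_of_real (mu L) \<cdot>\<^sub>m Y - Z) (1\<^sub>m n - complex_of_real 0 \<cdot>\<^sub>m Y - Z)"
proof -
  have m: "((\<lambda>L. complex_of_real (mu L)) \<longlongrightarrow> complex_of_real 0) sequentially"
    by (rule tendsto_of_real[OF mu])
  show a: "mconv (\<lambda>L. 1\<^sub>m n - complex_of_real (mu L) \<cdot>\<^sub>m Y) (1\<^sub>m n - complex_of_real 0 \<cdot>\<^sub>m Y)"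
    by (rule mconv_minus[OF mconv_const mconv_smult[OF mconv_const m] one_carrier_mat smult_carrier_mat[OF Y]])
  show "mconv (\<lambda>L. 1\<^sub>m n - complex_of_real (mu L) \<cdot>\<^sub>m Y - Z) (1\<^sub>m n - complex_of_real 0 \<cdot>\<^sub>m Y - Z)"
    by (rule mconv_minus[OF a mconv_const _ Z], rule minus_carrier_mat, rule smult_carrier_mat[OF Y])
qed



lemma X_conv:
  fixes Q QD QtD TFQ TCQ TFA TCA :: "real mat" and A At :: "complex mat"
  assumes mu: "(mu \<longlongrightarrow> 0) sequentially"
    and Q: "Q \<in> carrier_mat M M" and QD: "QD \<in> carrier_mat M M" and A: "A \<in> carrier_mat N N"
    and QtD: "QtD \<in> carrier_mat Mt Mt" and At: "At \<in> carrier_mat Nt Nt"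
    and TFQ: "TFQ \<in> carrier_mat Mt M" and TCQ: "TCQ \<in> carrier_mat M Mt"
    and TFA: "TFA \<in> carrier_mat Nt N" and TCA: "TCA \<in> carrier_mat N Nt"
    and d1: "det (Phat K M N QD A 0) \<noteq> 0" and d2: "det (Ptilde K Mt Nt QtD At 0) \<noteq> 0"
  shows "mconv (\<lambda>L. T_S K M N Q QD A (mu L) * T_CGC K M N Mt Nt Q A QtD At TFQ TCQ TFA TCA (mu L))
     (T_S K M N Q QD A 0 * T_CGC K M N Mt Nt Q A QtD At TFQ TCQ TFA TCA 0)"
proof -
  let ?n = "K*M*N" and ?nt = "K*Mt*Nt"
  have Y1: "kron (1\<^sub>m K) (kron (cmat Q) A) \<in> carrier_mat ?n ?n"
    using kron_carrier_mat[OF one_carrier_mat kron_carrier_mat[OF cmat_carrier[OF Q] A], of K] by (simp only: mult.assoc)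
  have Y2: "kron (1\<^sub>m K) (kron (cmat QD) A) \<in> carrier_mat ?n ?n"
    using kron_carrier_mat[OF one_carrier_mat kron_carrier_mat[OF cmat_carrier[OF QD] A], of K] by (simp only: mult.assoc)
  have Y3: "kron (1\<^sub>m K) (kron (cmat QtD) At) \<in> carrier_mat ?nt ?nt"
    using kron_carrier_mat[OF one_carrier_mat kron_carrier_mat[OF cmat_carrier[OF QtD] At], of K] by (simp only: mult.assoc)
  have Z1: "kron (Esub K) (kron (Nlast M) (1\<^sub>m N)) \<in> carrier_mat ?n ?n"
    using kron_carrier_mat[OF Esub_carrier(1) kron_carrier_mat[OF Nlast_carrier(1) one_carrier_mat], of K M N] by (simp only: mult.assoc)
  have Z2: "kron (Esub K) (kron (Nlast Mt) (1\<^sub>m Nt)) \<in> carrier_mat ?nt ?nt"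
    using kron_carrier_mat[OF Esub_carrier(1) kron_carrier_mat[OF Nlast_carrier(1) one_carrier_mat], of K Mt Nt] by (simp only: mult.assoc)
  have P: "kron (1\<^sub>m K) (kron (cmat TCQ) (cmat TCA)) \<in> carrier_mat ?n ?nt"
    using kron_carrier_mat[OF one_carrier_mat kron_carrier_mat[OF cmat_carrier[OF TCQ] cmat_carrier[OF TCA]], of K] by (simp only: mult.assoc)
  have R: "kron (1\<^sub>m K) (kron (cmat TFQ) (cmat TFA)) \<in> carrier_mat ?nt ?n"
    using kron_carrier_mat[OF one_carrier_mat kron_carrier_mat[OF cmat_carrier[OF TFQ] cmat_carrier[OF TFA]], of K] by (simp only: mult.assoc)
  have cC: "mconv (\<lambda>L. Cmat K M N Q A (mu L)) (Cmat K M N Q A 0)"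
    unfolding Cmat_def by (rule mconv_affine(2)[OF mu Y1 Z1])
  have cPh: "mconv (\<lambda>L. Phat K M N QD A (mu L)) (Phat K M N QD A 0)"
    unfolding Phat_def by (rule mconv_affine(1)[OF mu Y2 Y2])
  have cPt: "mconv (\<lambda>L. Ptilde K Mt Nt QtD At (mu L)) (Ptilde K Mt Nt QtD At 0)"
    unfolding Ptilde_def by (rule mconv_affine(2)[OF mu Y3 Z2])
  have C0: "Cmat K M N Q A 0 \<in> carrier_mat ?n ?n" unfolding Cmat_def by (rule minus_carrier_mat[OF Z1])
  have Ph0: "Phat K M N QD A 0 \<in> carrier_mat ?n ?n" unfolding Phat_def by (rule minus_carrier_mat, rule smult_carrier_mat[OF Y2])
  have Pt0: "Ptilde K Mt Nt QtD At 0 \<in> carrier_mat ?nt ?nt" unfolding Ptilde_def by (rule minus_carrier_mat[OF Z2])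
  have iPh0: "minv (Phat K M N QD A 0) \<in> carrier_mat ?n ?n" by (rule minv_carrier_det[OF Ph0 d1])
  have iPt0: "minv (Ptilde K Mt Nt QtD At 0) \<in> carrier_mat ?nt ?nt" by (rule minv_carrier_det[OF Pt0 d2])
  have ciPh: "mconv (\<lambda>L. minv (Phat K M N QD A (mu L))) (minv (Phat K M N QD A 0))" by (rule mconv_minv[OF cPh Ph0 d1])
  have ciPt: "mconv (\<lambda>L. minv (Ptilde K Mt Nt QtD At (mu L))) (minv (Ptilde K Mt Nt QtD At 0))" by (rule mconv_minv[OF cPt Pt0 d2])
  have TS: "mconv (\<lambda>L. T_S K M N Q QD A (mu L)) (T_S K M N Q QD A 0)"
    unfolding T_S_def
    by (rule mconv_minus[OF mconv_const mconv_mult[OF ciPh cC iPh0 C0] one_carrier_mat mult_carrier_mat[OF iPh0 C0]])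
  have TS0: "T_S K M N Q QD A 0 \<in> carrier_mat ?n ?n" unfolding T_S_def by (rule minus_carrier_mat, rule mult_carrier_mat[OF iPh0 C0])
  have m1: "mconv (\<lambda>L. kron (1\<^sub>m K) (kron (cmat TCQ) (cmat TCA)) * minv (Ptilde K Mt Nt QtD At (mu L)))
      (kron (1\<^sub>m K) (kron (cmat TCQ) (cmat TCA)) * minv (Ptilde K Mt Nt QtD At 0))"
    by (rule mconv_mult[OF mconv_const ciPt P iPt0])
  have m1c: "kron (1\<^sub>m K) (kron (cmat TCQ) (cmat TCA)) * minv (Ptilde K Mt Nt QtD At 0) \<in> carrier_mat ?n ?nt"
    by (rule mult_carrier_mat[OF P iPt0])
  note m2 = mconv_mult[OF m1 mconv_const m1c R]
  note m2c = mult_carrier_mat[OF m1c R]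
  note m3 = mconv_mult[OF m2 cC m2c C0]
  note m3c = mult_carrier_mat[OF m2c C0]
  have TC: "mconv (\<lambda>L. T_CGC K M N Mt Nt Q A QtD At TFQ TCQ TFA TCA (mu L)) (T_CGC K M N Mt Nt Q A QtD At TFQ TCQ TFA TCA 0)"
    unfolding T_CGC_def by (rule mconv_minus[OF mconv_const m3 one_carrier_mat m3c])
  have TC0: "T_CGC K M N Mt Nt Q A QtD At TFQ TCQ TFA TCA 0 \<in> carrier_mat ?n ?n"
    unfolding T_CGC_def by (rule minus_carrier_mat[OF m3c])
  show ?thesis by (rule mconv_mult[OF TS TC TS0 TC0])
qed

lemma sum_divmod: "(\<Sum>j<M*N. f (j div N) (j mod N)) = (\<Sum>m<M. \<Sum>n<N. f m n)" for f :: "nat \<Rightarrow> nat \<Rightarrow> 'a::comm_monoid_add"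
proof -
  have "(\<Sum>j<M*N. f (j div N) (j mod N)) = (\<Sum>m<M. \<Sum>j\<in>{m*N..<m*N+N}. f (j div N) (j mod N))"
    by (rule sum.nat_group[symmetric])
  also have "\<dots> = (\<Sum>m<M. \<Sum>n<N. f m n)"
  proof (rule sum.cong[OF refl])
    fix m assume "m \<in> {..<M}"
    have "(\<Sum>j\<in>{m*N..<m*N+N}. f (j div N) (j mod N)) = (\<Sum>n\<in>{0..<N}. f ((m*N+n) div N) ((m*N+n) mod N))"
      by (rule sum.reindex_bij_witness[of _ "\<lambda>n. m*N+n" "\<lambda>j. j - m*N"]) (auto simp: div_add1_eq)
    also have "\<dots> = (\<Sum>n<N. f m n)" by (rule sum.cong) (auto simp: atLeast0LessThan)
    finally show "(\<Sum>j\<in>{m*N..<m*N+N}. f (j div N) (j mod N)) = (\<Sum>n<N. f m n)" .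
  qed
  finally show ?thesis .
qed

definition subd :: "nat \<Rightarrow> nat \<Rightarrow> complex mat \<Rightarrow> bool" where
  "subd br bc X \<longleftrightarrow> (\<forall>i<dim_row X. \<forall>j<dim_col X. X $$ (i,j) \<noteq> 0 \<longrightarrow> i div br = j div bc + 1)"
definition bdiag :: "nat \<Rightarrow> nat \<Rightarrow> complex mat \<Rightarrow> bool" where
  "bdiag br bc X \<longleftrightarrow> (\<forall>i<dim_row X. \<forall>j<dim_col X. X $$ (i,j) \<noteq> 0 \<longrightarrow> i div br = j div bc)"

lemma subd_kron: "Y \<in> carrier_mat r c \<Longrightarrow> subd r c (kron (Esub K) Y)"
  unfolding subd_def
proof (intro allI impI)
  fix i j assume Y: "Y \<in> carrier_mat r c" and i: "i < dim_row (kron (Esub K) Y)" and j: "j < dim_col (kron (Esub K) Y)"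
    and nz: "kron (Esub K) Y $$ (i,j) \<noteq> 0"
  have i': "i div r < K" and j': "j div c < K" using i j Y div_lt_K by auto
  show "i div r = j div c + 1" using nz i j Y i' j' by (auto simp: Esub_def split: if_splits)
qed

lemma bdiag_kron: "Y \<in> carrier_mat r c \<Longrightarrow> bdiag r c (kron (1\<^sub>m K) Y)"
  unfolding bdiag_def
proof (intro allI impI)
  fix i j assume Y: "Y \<in> carrier_mat r c" and i: "i < dim_row (kron (1\<^sub>m K) Y)" and j: "j < dim_col (kron (1\<^sub>m K) Y)"
    and nz: "kron (1\<^sub>m K) Y $$ (i,j) \<noteq> 0"
  have i': "i div r < K" and j': "j div c < K" using i j Y div_lt_K by auto
  show "i div r = j div c" using nz i j Y i' j' by (auto split: if_splits)
qed

lemma bdiag_one: "bdiag b b (1\<^sub>m n)"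
  unfolding bdiag_def by auto

lemma bdiag_minus: assumes "A \<in> carrier_mat n m" "B \<in> carrier_mat n m" "bdiag b c A" "bdiag b c B" shows "bdiag b c (A - B)"
  unfolding bdiag_def
proof (intro allI impI)
  fix i j assume i: "i < dim_row (A - B)" and j: "j < dim_col (A - B)" and nz: "(A - B) $$ (i,j) \<noteq> 0"
  hence "A $$ (i,j) \<noteq> 0 \<or> B $$ (i,j) \<noteq> 0" using assms by auto
  thus "i div b = j div c" using assms i j unfolding bdiag_def by auto
qed

lemma bdiag_mult:
  assumes A: "A \<in> carrier_mat n1 n2" and B: "B \<in> carrier_mat n2 n3" and "bdiag b1 b2 A" "bdiag b2 b3 B"
  shows "bdiag b1 b3 (A * B)"
  unfolding bdiag_def
proof (intro allI impI)
  fix i j assume i: "i < dim_row (A * B)" and j: "j < dim_col (A * B)" and nz: "(A * B) $$ (i,j) \<noteq> 0"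
  have "(A * B) $$ (i,j) = (\<Sum>l<n2. A $$ (i,l) * B $$ (l,j))"
    using A B i j by (auto simp: scalar_prod_def intro!: sum.cong)
  with nz obtain l where l: "l < n2" and "A $$ (i,l) * B $$ (l,j) \<noteq> 0"
    by (metis (no_types, lifting) lessThan_iff sum.neutral)
  hence "A $$ (i,l) \<noteq> 0" "B $$ (l,j) \<noteq> 0" by auto
  thus "i div b1 = j div b3" using assms i j l unfolding bdiag_def by auto
qed

lemma subd_mult:
  assumes A: "A \<in> carrier_mat n1 n2" and B: "B \<in> carrier_mat n2 n3" and "subd b1 b2 A" "bdiag b2 b3 B"
  shows "subd b1 b3 (A * B)"
  unfolding subd_def
proof (intro allI impI)
  fix i j assume i: "i < dim_row (A * B)" and j: "j < dim_col (A * B)" and nz: "(A * B) $$ (i,j) \<noteq> 0"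
  have "(A * B) $$ (i,j) = (\<Sum>l<n2. A $$ (i,l) * B $$ (l,j))"
    using A B i j by (auto simp: scalar_prod_def intro!: sum.cong)
  with nz obtain l where l: "l < n2" and "A $$ (i,l) * B $$ (l,j) \<noteq> 0"
    by (metis (no_types, lifting) lessThan_iff sum.neutral)
  hence "A $$ (i,l) \<noteq> 0" "B $$ (l,j) \<noteq> 0" by auto
  thus "i div b1 = j div b3 + 1" using assms i j l unfolding subd_def bdiag_def by auto
qed

lemma minv_left_det:
  fixes A :: "complex mat"
  assumes A: "A \<in> carrier_mat n n" and d: "det A \<noteq> 0"
  shows "minv A * A = 1\<^sub>m n"
proof -
  have "minv A * A = (1 / det A) \<cdot>\<^sub>m (adj_mat A * A)"
    unfolding minv_adj[OF A d] by (rule mult_smult_assoc_mat[OF adj_mat(1)[OF A] A])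
  also have "\<dots> = 1\<^sub>m n" unfolding adj_mat(3)[OF A] using d by (intro eq_matI) auto
  finally show ?thesis .
qed

lemma det_unit_lower:
  fixes St :: "complex mat"
  assumes St: "St \<in> carrier_mat n n" and low: "\<And>i j. i < n \<Longrightarrow> j < n \<Longrightarrow> St $$ (i,j) \<noteq> 0 \<Longrightarrow> j < i"
  shows "det (1\<^sub>m n - St) = 1"
proof -
  have c: "1\<^sub>m n - St \<in> carrier_mat n n" using St by (rule minus_carrier_mat)
  have "det (1\<^sub>m n - St) = prod_list (diag_mat (1\<^sub>m n - St))"
  proof (rule det_lower_triangular[OF _ c])
    fix i j assume "i < j" "j < n"
    thus "(1\<^sub>m n - St) $$ (i,j) = 0" using low[of i j] St by force
  qed
  also have "diag_mat (1\<^sub>m n - St) = map (\<lambda>_. 1) [0..<n]"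
  proof -
    have "\<forall>x<n. St $$ (x,x) = 0" using low by (metis less_irrefl)
    thus ?thesis unfolding diag_mat_def using St by (auto intro!: map_cong)
  qed
  also have "prod_list (map (\<lambda>_. 1::complex) [0..<n]) = 1" by (induct n) auto
  finally show ?thesis .
qed

lemma Y_simp:
  fixes Q QD QtD TFQ TCQ TFA TCA :: "real mat" and A At :: "complex mat"
  assumes Q: "Q \<in> carrier_mat M M" and QD: "QD \<in> carrier_mat M M" and A: "A \<in> carrier_mat N N"
    and QtD: "QtD \<in> carrier_mat Mt Mt" and At: "At \<in> carrier_mat Nt Nt"
    and TFQ: "TFQ \<in> carrier_mat Mt M" and TCQ: "TCQ \<in> carrier_mat M Mt"
    and TFA: "TFA \<in> carrier_mat Nt N" and TCA: "TCA \<in> carrier_mat N Nt"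
    and comm: "kron (Esub K) (kron (Nlast Mt) (1\<^sub>m Nt)) * kron (1\<^sub>m K) (kron (cmat TFQ) (cmat TFA))
       = kron (1\<^sub>m K) (kron (cmat TFQ) (cmat TFA)) * kron (Esub K) (kron (Nlast M) (1\<^sub>m N))"
  shows "det (Phat K M N QD A 0) \<noteq> 0" "det (Ptilde K Mt Nt QtD At 0) \<noteq> 0"
    "T_S K M N Q QD A 0 * T_CGC K M N Mt Nt Q A QtD At TFQ TCQ TFA TCA 0 =
     kron (Esub K) (kron (Nlast M) (1\<^sub>m N)) * (1\<^sub>m (K*M*N) - kron (1\<^sub>m K) (kron (cmat TCQ) (cmat TCA)) * kron (1\<^sub>m K) (kron (cmat TFQ) (cmat TFA)))"
proof -
  let ?n = "K*M*N" and ?nt = "K*Mt*Nt"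
  let ?S = "kron (Esub K) (kron (Nlast M) (1\<^sub>m N))" and ?St = "kron (Esub K) (kron (Nlast Mt) (1\<^sub>m Nt))"
  let ?P = "kron (1\<^sub>m K) (kron (cmat TCQ) (cmat TCA))" and ?R = "kron (1\<^sub>m K) (kron (cmat TFQ) (cmat TFA))"
  have Y1: "kron (1\<^sub>m K) (kron (cmat Q) A) \<in> carrier_mat ?n ?n"
    using kron_carrier_mat[OF one_carrier_mat kron_carrier_mat[OF cmat_carrier[OF Q] A], of K] by (simp only: mult.assoc)
  have Y2: "kron (1\<^sub>m K) (kron (cmat QD) A) \<in> carrier_mat ?n ?n"
    using kron_carrier_mat[OF one_carrier_mat kron_carrier_mat[OF cmat_carrier[OF QD] A], of K] by (simp only: mult.assoc)
  have Y3: "kron (1\<^sub>m K) (kron (cmat QtD) At) \<in> carrier_mat ?nt ?nt"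
    using kron_carrier_mat[OF one_carrier_mat kron_carrier_mat[OF cmat_carrier[OF QtD] At], of K] by (simp only: mult.assoc)
  have Z1: "?S \<in> carrier_mat ?n ?n"
    using kron_carrier_mat[OF Esub_carrier(1) kron_carrier_mat[OF Nlast_carrier(1) one_carrier_mat], of K M N] by (simp only: mult.assoc)
  have Z2: "?St \<in> carrier_mat ?nt ?nt"
    using kron_carrier_mat[OF Esub_carrier(1) kron_carrier_mat[OF Nlast_carrier(1) one_carrier_mat], of K Mt Nt] by (simp only: mult.assoc)
  have P: "?P \<in> carrier_mat ?n ?nt"
    using kron_carrier_mat[OF one_carrier_mat kron_carrier_mat[OF cmat_carrier[OF TCQ] cmat_carrier[OF TCA]], of K] by (simp only: mult.assoc)
  have R: "?R \<in> carrier_mat ?nt ?n"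
    using kron_carrier_mat[OF one_carrier_mat kron_carrier_mat[OF cmat_carrier[OF TFQ] cmat_carrier[OF TFA]], of K] by (simp only: mult.assoc)
  have Ph0: "Phat K M N QD A 0 = 1\<^sub>m ?n" unfolding Phat_def using QD A by (intro eq_matI) (auto simp: mult.assoc)
  have C0: "Cmat K M N Q A 0 = 1\<^sub>m ?n - ?S" unfolding Cmat_def using Q A by (intro eq_matI) (auto simp: mult.assoc)
  have Pt0: "Ptilde K Mt Nt QtD At 0 = 1\<^sub>m ?nt - ?St" unfolding Ptilde_def using QtD At by (intro eq_matI) (auto simp: mult.assoc)
  show "det (Phat K M N QD A 0) \<noteq> 0" unfolding Ph0 by simp
  have low: "j < i" if "i < ?nt" "j < ?nt" "?St $$ (i,j) \<noteq> 0" for i j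
  proof -
    have "subd (Mt*Nt) (Mt*Nt) ?St" by (rule subd_kron, auto)
    hence "i div (Mt*Nt) = j div (Mt*Nt) + 1" using that Z2 unfolding subd_def by auto
    thus "j < i" by (metis div_le_mono less_add_one not_le less_le_trans)
  qed
  have dPt: "det (1\<^sub>m ?nt - ?St) = 1" by (rule det_unit_lower[OF Z2 low])
  show "det (Ptilde K Mt Nt QtD At 0) \<noteq> 0" unfolding Pt0 dPt by simp
  have mi: "minv (1\<^sub>m ?n) = 1\<^sub>m ?n" by (rule inverse_unique) auto
  have TS0: "T_S K M N Q QD A 0 = ?S"
    unfolding T_S_def Ph0 C0 mi using Z1 by (intro eq_matI) auto
  have Ptc: "1\<^sub>m ?nt - ?St \<in> carrier_mat ?nt ?nt" using Z2 by (rule minus_carrier_mat)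
  have iPt: "minv (1\<^sub>m ?nt - ?St) \<in> carrier_mat ?nt ?nt" by (rule minv_carrier_det[OF Ptc], simp add: dPt)
  have iPtl: "minv (1\<^sub>m ?nt - ?St) * (1\<^sub>m ?nt - ?St) = 1\<^sub>m ?nt" by (rule minv_left_det[OF Ptc], simp add: dPt)
  have RC: "?R * (1\<^sub>m ?n - ?S) = (1\<^sub>m ?nt - ?St) * ?R"
  proof -
    have "?R * (1\<^sub>m ?n - ?S) = ?R * 1\<^sub>m ?n - ?R * ?S" by (rule mult_minus_distrib_mat[OF R one_carrier_mat Z1])
    also have "\<dots> = ?R - ?St * ?R" using right_mult_one_mat[OF R] comm by simp
    also have "\<dots> = 1\<^sub>m ?nt * ?R - ?St * ?R" using left_mult_one_mat[OF R] by simp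
    also have "\<dots> = (1\<^sub>m ?nt - ?St) * ?R" by (rule minus_mult_distrib_mat[symmetric, OF one_carrier_mat Z2 R])
    finally show ?thesis .
  qed
  have "?P * minv (1\<^sub>m ?nt - ?St) * ?R * (1\<^sub>m ?n - ?S) = (?P * minv (1\<^sub>m ?nt - ?St)) * (?R * (1\<^sub>m ?n - ?S))"
    by (rule assoc_mult_mat[OF mult_carrier_mat[OF P iPt] R minus_carrier_mat[OF Z1]])
  also have "\<dots> = (?P * minv (1\<^sub>m ?nt - ?St)) * ((1\<^sub>m ?nt - ?St) * ?R)" unfolding RC ..
  also have "\<dots> = ?P * (minv (1\<^sub>m ?nt - ?St) * ((1\<^sub>m ?nt - ?St) * ?R))"
    by (rule assoc_mult_mat[OF P iPt mult_carrier_mat[OF Ptc R]])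
  also have "minv (1\<^sub>m ?nt - ?St) * ((1\<^sub>m ?nt - ?St) * ?R) = (minv (1\<^sub>m ?nt - ?St) * (1\<^sub>m ?nt - ?St)) * ?R"
    by (rule assoc_mult_mat[symmetric, OF iPt Ptc R])
  also have "\<dots> = ?R" unfolding iPtl by (rule left_mult_one_mat[OF R])
  finally have PR: "?P * minv (1\<^sub>m ?nt - ?St) * ?R * (1\<^sub>m ?n - ?S) = ?P * ?R" .
  have TC0: "T_CGC K M N Mt Nt Q A QtD At TFQ TCQ TFA TCA 0 = 1\<^sub>m ?n - ?P * ?R"
    unfolding T_CGC_def C0 Pt0 PR ..
  show "T_S K M N Q QD A 0 * T_CGC K M N Mt Nt Q A QtD At TFQ TCQ TFA TCA 0 = ?S * (1\<^sub>m ?n - ?P * ?R)"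
    unfolding TS0 TC0 ..
qed

lemma kron1_carrier: "X \<in> carrier_mat a b \<Longrightarrow> Y \<in> carrier_mat c d \<Longrightarrow> kron (1\<^sub>m K) (kron X Y) \<in> carrier_mat (K*a*c) (K*b*d)"
  using kron_carrier_mat[OF one_carrier_mat kron_carrier_mat, of X a b Y c d K] by (simp only: mult.assoc)

lemma kronE_carrier: "X \<in> carrier_mat a b \<Longrightarrow> Y \<in> carrier_mat c d \<Longrightarrow> kron (Esub K) (kron X Y) \<in> carrier_mat (K*a*c) (K*b*d)"
  using kron_carrier_mat[OF Esub_carrier(1) kron_carrier_mat, of X a b Y c d K] by (simp only: mult.assoc)

lemma Y_zero:
  fixes TFQ TCQ TFA TCA :: "real mat"
  assumes TFQ: "TFQ \<in> carrier_mat Mt M" and TCQ: "TCQ \<in> carrier_mat M Mt"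
    and TFA: "TFA \<in> carrier_mat Nt N" and TCA: "TCA \<in> carrier_mat N Nt"
    and k: "k < K" "k \<noteq> 1" and r: "r < M*N" and s: "s < M*N"
  shows "(kron (Esub K) (kron (Nlast M) (1\<^sub>m N)) * (1\<^sub>m (K*M*N) - kron (1\<^sub>m K) (kron (cmat TCQ) (cmat TCA)) * kron (1\<^sub>m K) (kron (cmat TFQ) (cmat TFA))))
     $$ (k*(M*N) + r, s) = 0"
proof (rule ccontr)
  let ?n = "K*M*N" and ?nt = "K*Mt*Nt"
  let ?S = "kron (Esub K) (kron (Nlast M) (1\<^sub>m N))"
  let ?P = "kron (1\<^sub>m K) (kron (cmat TCQ) (cmat TCA))" and ?R = "kron (1\<^sub>m K) (kron (cmat TFQ) (cmat TFA))"
  have S: "?S \<in> carrier_mat ?n ?n" by (rule kronE_carrier) auto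
  have P: "?P \<in> carrier_mat ?n ?nt" by (rule kron1_carrier) (use TCQ TCA in auto)
  have R: "?R \<in> carrier_mat ?nt ?n" by (rule kron1_carrier) (use TFQ TFA in auto)
  have sS: "subd (M*N) (M*N) ?S" by (rule subd_kron) auto
  have bP: "bdiag (M*N) (Mt*Nt) ?P" by (rule bdiag_kron) (use TCQ TCA in auto)
  have bR: "bdiag (Mt*Nt) (M*N) ?R" by (rule bdiag_kron) (use TFQ TFA in auto)
  have bPR: "bdiag (M*N) (M*N) (?P * ?R)" by (rule bdiag_mult[OF P R bP bR])
  have PR: "?P * ?R \<in> carrier_mat ?n ?n" using P R by simp
  have bD: "bdiag (M*N) (M*N) (1\<^sub>m ?n - ?P * ?R)" by (rule bdiag_minus[OF one_carrier_mat PR bdiag_one bPR])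
  have D: "1\<^sub>m ?n - ?P * ?R \<in> carrier_mat ?n ?n" using PR by (rule minus_carrier_mat)
  have sY: "subd (M*N) (M*N) (?S * (1\<^sub>m ?n - ?P * ?R))" by (rule subd_mult[OF S D sS bD])
  assume nz: "(?S * (1\<^sub>m ?n - ?P * ?R)) $$ (k*(M*N) + r, s) \<noteq> 0"
  have b: "0 < M*N" using le_less_trans[OF le0 r] .
  have i: "k*(M*N) + r < ?n"
  proof -
    have "k*(M*N) + r < k*(M*N) + M*N" using r by simp
    also have "\<dots> = Suc k * (M*N)" by simp
    also have "\<dots> \<le> K*(M*N)" using k by (intro mult_le_mono1) auto
    finally show ?thesis by (simp add: mult.assoc)
  qed
  have j: "s < ?n" using s k by (metis mult.assoc less_le_trans mult_le_mono1 mult_1 not_less_eq_eq not_less_zero le_eq_less_or_eq less_one zero_less_iff_neq_zero Suc_leI)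
  have Yc: "?S * (1\<^sub>m ?n - ?P * ?R) \<in> carrier_mat ?n ?n" by (rule mult_carrier_mat[OF S D])
  have "(k*(M*N) + r) div (M*N) = s div (M*N) + 1"
  proof -
    have "\<forall>i<dim_row (?S * (1\<^sub>m ?n - ?P * ?R)). \<forall>j<dim_col (?S * (1\<^sub>m ?n - ?P * ?R)).
       (?S * (1\<^sub>m ?n - ?P * ?R)) $$ (i,j) \<noteq> 0 \<longrightarrow> i div (M*N) = j div (M*N) + 1"
      using sY unfolding subd_def by blast
    moreover have "dim_row (?S * (1\<^sub>m ?n - ?P * ?R)) = ?n" "dim_col (?S * (1\<^sub>m ?n - ?P * ?R)) = ?n"
      using carrier_matD[OF Yc] by auto
    ultimately show ?thesis using nz i j by metis
  qed
  moreover have "(k*(M*N) + r) div (M*N) = k" using r b by simp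
  moreover have "s div (M*N) = 0" using s by simp
  ultimately show False using k by simp
qed

lemma mmv_sum: "A \<in> carrier_mat n m \<Longrightarrow> v \<in> carrier_vec m \<Longrightarrow> i < n \<Longrightarrow>
  (A *\<^sub>v v) $ i = (\<Sum>j<m. A $$ (i,j) * v $ j)"
  by (auto simp: scalar_prod_def intro!: sum.cong)

lemma Y_eig:
  fixes TFQ TCQ TFA TCA :: "real mat"
  assumes TFQ: "TFQ \<in> carrier_mat Mt M" and TCQ: "TCQ \<in> carrier_mat M Mt"
    and TFA: "TFA \<in> carrier_mat Nt N" and TCA: "TCA \<in> carrier_mat N Nt"
    and w: "w \<in> carrier_vec N" and ker: "cmat TFA *\<^sub>v w = 0\<^sub>v Nt" and r: "r < M*N"
  shows "(\<Sum>s<M*N. (kron (Esub 2) (kron (Nlast M) (1\<^sub>m N)) * (1\<^sub>m (2*M*N) - kron (1\<^sub>m 2) (kron (cmat TCQ) (cmat TCA)) * kron (1\<^sub>m 2) (kron (cmat TFQ) (cmat TFA))))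
     $$ (M*N + r, s) * w $ (s mod N)) = w $ (r mod N)"
proof -
  let ?b = "M*N" and ?n = "2*M*N" and ?nt = "2*Mt*Nt"
  let ?S = "kron (Esub 2) (kron (Nlast M) (1\<^sub>m N))"
  let ?P = "kron (1\<^sub>m 2) (kron (cmat TCQ) (cmat TCA))" and ?R = "kron (1\<^sub>m 2) (kron (cmat TFQ) (cmat TFA))"
  let ?Y = "?S * (1\<^sub>m ?n - ?P * ?R)"
  have S: "?S \<in> carrier_mat ?n ?n" by (rule kronE_carrier) auto
  have P: "?P \<in> carrier_mat ?n ?nt" by (rule kron1_carrier) (use TCQ TCA in auto)
  have R: "?R \<in> carrier_mat ?nt ?n" by (rule kron1_carrier) (use TFQ TFA in auto)
  have PR: "?P * ?R \<in> carrier_mat ?n ?n" using P R by simp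
  have D: "1\<^sub>m ?n - ?P * ?R \<in> carrier_mat ?n ?n" using PR by (rule minus_carrier_mat)
  have N: "0 < N" using le_less_trans[OF le0 r] by simp
  have M: "0 < M" using le_less_trans[OF le0 r] by simp
  define vt where "vt = vec ?n (\<lambda>j. if j < ?b then w $ (j mod N) else 0)"
  have vt: "vt \<in> carrier_vec ?n" unfolding vt_def by simp
  have bn: "?b < ?n" using M N by simp
  have i: "?b + r < ?n" using r by simp
  have step1: "(\<Sum>s<?b. ?Y $$ (?b + r, s) * w $ (s mod N)) = (?Y *\<^sub>v vt) $ (?b + r)"
  proof -
    have "(?Y *\<^sub>v vt) $ (?b + r) = (\<Sum>j<?n. ?Y $$ (?b + r, j) * vt $ j)"
      by (rule mmv_sum[OF mult_carrier_mat[OF S D] vt i])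
    also have "\<dots> = (\<Sum>j<?b. ?Y $$ (?b + r, j) * vt $ j)"
      by (rule sum.mono_neutral_right, insert bn, auto simp: vt_def)
    also have "\<dots> = (\<Sum>s<?b. ?Y $$ (?b + r, s) * w $ (s mod N))"
      using bn by (intro sum.cong) (auto simp: vt_def)
    finally show ?thesis by simp
  qed
  have Rv: "?R *\<^sub>v vt = 0\<^sub>v ?nt"
  proof (rule eq_vecI)
    fix i assume "i < dim_vec (0\<^sub>v ?nt :: complex vec)"
    hence i: "i < ?nt" by simp
    let ?a = "(i mod (Mt*Nt)) div Nt" and ?c = "(i mod (Mt*Nt)) mod Nt"
    have c: "?c < Nt" using i by (cases Nt) auto
    have "(?R *\<^sub>v vt) $ i = (\<Sum>j<?n. ?R $$ (i,j) * vt $ j)"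
      by (rule mmv_sum[OF R vt i])
    also have "\<dots> = (\<Sum>j<?b. ?R $$ (i,j) * w $ (j mod N))"
    proof -
      have "(\<Sum>j<?n. ?R $$ (i,j) * vt $ j) = (\<Sum>j<?b. ?R $$ (i,j) * vt $ j)"
        by (rule sum.mono_neutral_right, insert bn, auto simp: vt_def)
      also have "\<dots> = (\<Sum>j<?b. ?R $$ (i,j) * w $ (j mod N))"
        using bn by (intro sum.cong) (auto simp: vt_def)
      finally show ?thesis .
    qed
    also have "\<dots> = (\<Sum>j<?b. 1\<^sub>m 2 $$ (i div (Mt*Nt), 0) * (cmat TFQ $$ (?a, j div N) * (cmat TFA $$ (?c, j mod N) * w $ (j mod N))))"
    proof (rule sum.cong[OF refl])
      fix j assume j: "j \<in> {..<?b}"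
      have "j < 2 * (M*N)" using j by auto
      moreover have i2: "i < 2 * (Mt*Nt)" using i by (simp add: mult.assoc)
      moreover have "i mod (Mt*Nt) < Mt*Nt" using i2 by (cases "Mt*Nt") auto
      moreover have "dim_row TFQ = Mt" "dim_col TFQ = M" "dim_row TFA = Nt" "dim_col TFA = N" using TFQ TFA by auto
      moreover have "j < M * N" using j by auto
      ultimately show "?R $$ (i,j) * w $ (j mod N) = 1\<^sub>m 2 $$ (i div (Mt*Nt), 0) * (cmat TFQ $$ (?a, j div N) * (cmat TFA $$ (?c, j mod N) * w $ (j mod N)))"
        by (simp add: mult.assoc)
    qed
    also have "\<dots> = 1\<^sub>m 2 $$ (i div (Mt*Nt), 0) * (\<Sum>m<M. cmat TFQ $$ (?a, m) * (\<Sum>n<N. cmat TFA $$ (?c, n) * w $ n))"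
      by (subst sum_divmod[where f = "\<lambda>m n. 1\<^sub>m 2 $$ (i div (Mt*Nt), 0) * (cmat TFQ $$ (?a, m) * (cmat TFA $$ (?c, n) * w $ n))"])
         (simp add: sum_distrib_left)
    also have "(\<Sum>n<N. cmat TFA $$ (?c, n) * w $ n) = (cmat TFA *\<^sub>v w) $ ?c"
      using c TFA w by (auto simp: scalar_prod_def intro!: sum.cong)
    also have "\<dots> = 0" using ker c by simp
    finally show "(?R *\<^sub>v vt) $ i = 0\<^sub>v ?nt $ i" using i by simp
  qed (use TFQ TFA in simp)
  have "?Y *\<^sub>v vt = ?S *\<^sub>v ((1\<^sub>m ?n - ?P * ?R) *\<^sub>v vt)" by (rule assoc_mult_mat_vec[OF S D vt])
  also have "(1\<^sub>m ?n - ?P * ?R) *\<^sub>v vt = 1\<^sub>m ?n *\<^sub>v vt - (?P * ?R) *\<^sub>v vt"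
    by (rule minus_mult_distrib_mat_vec[OF one_carrier_mat PR vt])
  also have "(?P * ?R) *\<^sub>v vt = ?P *\<^sub>v (?R *\<^sub>v vt)" by (rule assoc_mult_mat_vec[OF P R vt])
  also have "\<dots> = 0\<^sub>v ?n" unfolding Rv using P by (intro eq_vecI) (auto simp: scalar_prod_def)
  also have "1\<^sub>m ?n *\<^sub>v vt - 0\<^sub>v ?n = vt" using vt by (intro eq_vecI) auto
  finally have Yv: "?Y *\<^sub>v vt = ?S *\<^sub>v vt" .
  have "(?S *\<^sub>v vt) $ (?b + r) = (\<Sum>j<?n. ?S $$ (?b + r, j) * vt $ j)"
    by (rule mmv_sum[OF S vt i])
  also have "\<dots> = (\<Sum>j<?b. ?S $$ (?b + r, j) * w $ (j mod N))"
  proof -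
    have "(\<Sum>j<?n. ?S $$ (?b + r, j) * vt $ j) = (\<Sum>j<?b. ?S $$ (?b + r, j) * vt $ j)"
      by (rule sum.mono_neutral_right, insert bn, auto simp: vt_def)
    also have "\<dots> = (\<Sum>j<?b. ?S $$ (?b + r, j) * w $ (j mod N))"
      using bn by (intro sum.cong) (auto simp: vt_def)
    finally show ?thesis .
  qed
  also have "\<dots> = (\<Sum>j<?b. (if j div N = M - 1 \<and> j mod N = r mod N then w $ (j mod N) else 0))"
  proof (rule sum.cong[OF refl])
    fix j assume j: "j \<in> {..<?b}"
    have "j < 2 * (M*N)" using j by auto
    moreover have "?b + r < 2 * (M*N)" using r by simp
    moreover have "(?b + r) div ?b = 1" "(?b + r) mod ?b = r" using r M N by (auto simp: div_add_self1)
    moreover have "r div N < M" "j div N < M" using r j by (auto simp: div_lt_K)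
    ultimately show "?S $$ (?b + r, j) * w $ (j mod N) = (if j div N = M - 1 \<and> j mod N = r mod N then w $ (j mod N) else 0)"
      using j N by (auto simp: Esub_def Nlast_def)
  qed
  also have "\<dots> = (\<Sum>m<M. \<Sum>n<N. (if m = M - 1 \<and> n = r mod N then w $ n else 0))"
    by (rule sum_divmod[where f = "\<lambda>m n. if m = M - 1 \<and> n = r mod N then w $ n else 0"])
  also have "\<dots> = (\<Sum>m<M. if m = M - 1 then w $ (r mod N) else 0)"
    using N by (intro sum.cong) (auto simp: sum.delta)
  also have "\<dots> = w $ (r mod N)" using M by (simp add: sum.delta)
  finally have "(?S *\<^sub>v vt) $ (?b + r) = w $ (r mod N)" .
  thus ?thesis using step1 Yv by simp
qed

lemma X_trunc:
  fixes Q QD QtD TFQ TCQ TFA TCA :: "real mat" and A At :: "complex mat"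
  assumes Q: "Q \<in> carrier_mat M M" and QD: "QD \<in> carrier_mat M M" and A: "A \<in> carrier_mat N N"
    and QtD: "QtD \<in> carrier_mat Mt Mt" and At: "At \<in> carrier_mat Nt Nt"
    and TFQ: "TFQ \<in> carrier_mat Mt M" and TCQ: "TCQ \<in> carrier_mat M Mt"
    and TFA: "TFA \<in> carrier_mat Nt N" and TCA: "TCA \<in> carrier_mat N Nt"
    and KL: "K \<le> L" and i1: "invertible_mat (Phat L M N QD A m)" and i2: "invertible_mat (Ptilde L Mt Nt QtD At m)"
  shows "cutz (K*M*N) (K*M*N) (T_S L M N Q QD A m * T_CGC L M N Mt Nt Q A QtD At TFQ TCQ TFA TCA m)"
    "trunc (K*M*N) (K*M*N) (T_S L M N Q QD A m * T_CGC L M N Mt Nt Q A QtD At TFQ TCQ TFA TCA m)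
     = T_S K M N Q QD A m * T_CGC K M N Mt Nt Q A QtD At TFQ TCQ TFA TCA m"
    "dim_col (T_S L M N Q QD A m * T_CGC L M N Mt Nt Q A QtD At TFQ TCQ TFA TCA m) = L*M*N"
proof -
  have YP: "kron (cmat TCQ) (cmat TCA) \<in> carrier_mat (M*N) (Mt*Nt)"
    by (rule kron_carrier_mat[OF cmat_carrier[OF TCQ] cmat_carrier[OF TCA]])
  have YR: "kron (cmat TFQ) (cmat TFA) \<in> carrier_mat (Mt*Nt) (M*N)"
    by (rule kron_carrier_mat[OF cmat_carrier[OF TFQ] cmat_carrier[OF TFA]])
  note cP = kron_one_cut2[OF YP KL] and cR = kron_one_cut2[OF YR KL]
  note cC = Cmat_cut[OF Q A KL, of m] and cPh = Phat_cut[OF QD A KL, of m] and cPt = Ptilde_cut[OF QtD At KL, of m]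
  have k: "K*M*N \<le> L*M*N" and kt: "K*Mt*Nt \<le> L*Mt*Nt" using KL by (auto intro: mult_le_mono1)
  note T = trunc_X[OF cC(1) cPh(1) cPt(1) cP(1) cR(1) i1 i2 cC(2) cPh(2) cPt(2) cP(2) cR(2) k kt]
  show "cutz (K*M*N) (K*M*N) (T_S L M N Q QD A m * T_CGC L M N Mt Nt Q A QtD At TFQ TCQ TFA TCA m)"
    unfolding T_S_def T_CGC_def by (rule T(1))
  show "trunc (K*M*N) (K*M*N) (T_S L M N Q QD A m * T_CGC L M N Mt Nt Q A QtD At TFQ TCQ TFA TCA m)
     = T_S K M N Q QD A m * T_CGC K M N Mt Nt Q A QtD At TFQ TCQ TFA TCA m"
    unfolding T_S_def T_CGC_def T(2) cC(3) cPh(3) cPt(3) cP(3) cR(3) ..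
  show "dim_col (T_S L M N Q QD A m * T_CGC L M N Mt Nt Q A QtD At TFQ TCQ TFA TCA m) = L*M*N"
    unfolding T_S_def T_CGC_def using cC(1) by simp
qed


theorem theorem6:
  fixes M N Mt Nt :: nat
    and tau taut :: "nat \<Rightarrow> real"
    and QD QtD :: "real mat"
    and A At :: "complex mat"
    and TFAC TCAF :: "real mat"
    and Tend c :: real
    and mu :: "nat \<Rightarrow> real"
  assumes "0 < M" and "0 < Nt" and "Mt \<le> M" and "Nt < N" and "0 < Mt"
    and "right_radau_nodes M tau" and "right_radau_nodes Mt taut"
    and "lower_tri M QD" and "lower_tri Mt QtD"
    and "A \<in> carrier_mat N N" and "At \<in> carrier_mat Nt Nt"
    and "TFAC \<in> carrier_mat Nt N" and "TCAF \<in> carrier_mat N Nt"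
    and "0 < Tend" and "0 < c"
    and "\<And>L. 0 < L \<Longrightarrow> mu L = c * Tend / real L"
    and "\<And>L. 0 < L \<Longrightarrow> invertible_mat (Phat L M N QD A (mu L))"
    and "\<And>L. 0 < L \<Longrightarrow> invertible_mat (Ptilde L Mt Nt QtD At (mu L))"
    and "\<And>L. 0 < L \<Longrightarrow>
           kron (Esub L) (kron (Nlast Mt) (1\<^sub>m Nt)) *
             kron (1\<^sub>m L) (kron (cmat (lagrange_transfer Mt taut M tau)) (cmat TFAC))
         = kron (1\<^sub>m L) (kron (cmat (lagrange_transfer Mt taut M tau)) (cmat TFAC)) *
             kron (Esub L) (kron (Nlast M) (1\<^sub>m N))"
  shows "1 \<le> toeplitz_spectral_radius (M * N)
           (toeplitz_limit_blocks (M * N)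
              (\<lambda>L. T_S L M N (collocation_Q M tau) QD A (mu L) *
                   T_CGC L M N Mt Nt (collocation_Q M tau) A QtD At
                     (lagrange_transfer Mt taut M tau) (lagrange_transfer M tau Mt taut)
                     TFAC TCAF (mu L)))"
proof -
  let ?b = "M*N"
  define Q where "Q = collocation_Q M tau"
  define TFQ where "TFQ = lagrange_transfer Mt taut M tau"
  define TCQ where "TCQ = lagrange_transfer M tau Mt taut"
  define X where "X = (\<lambda>L. T_S L M N Q QD A (mu L) * T_CGC L M N Mt Nt Q A QtD At TFQ TCQ TFAC TCAF (mu L))"
  define Y where "Y = (\<lambda>K. kron (Esub K) (kron (Nlast M) (1\<^sub>m N)) * (1\<^sub>m (K*M*N) - kron (1\<^sub>m K) (kron (cmat TCQ) (cmat TCAF)) * kron (1\<^sub>m K) (kron (cmat TFQ) (cmat TFAC))))"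
  define B where "B = toeplitz_limit_blocks ?b X"
  have Qc: "Q \<in> carrier_mat M M" unfolding Q_def collocation_Q_def by simp
  have QDc: "QD \<in> carrier_mat M M" using assms(8) unfolding lower_tri_def by simp
  have QtDc: "QtD \<in> carrier_mat Mt Mt" using assms(9) unfolding lower_tri_def by simp
  have TFQc: "TFQ \<in> carrier_mat Mt M" unfolding TFQ_def lagrange_transfer_def by simp
  have TCQc: "TCQ \<in> carrier_mat M Mt" unfolding TCQ_def lagrange_transfer_def by simp
  note Ac = assms(10) and Atc = assms(11) and TFAc = assms(12) and TCAc = assms(13)
  have N0: "0 < N" using assms(2,4) by simp
  have mu0: "(mu \<longlongrightarrow> 0) sequentially"
  proof -
    have "((\<lambda>L. (c*Tend) / of_nat L) \<longlongrightarrow> 0) sequentially" by (rule lim_const_over_n)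
    moreover have "eventually (\<lambda>L. (c*Tend) / of_nat L = mu L) sequentially"
      using assms(16) unfolding eventually_sequentially by (intro exI[of _ 1]) auto
    ultimately show ?thesis by (rule Lim_transform_eventually)
  qed
  have lim_pos: "B k $$ (r,s) = Y (nat k + 1) $$ (nat k * ?b + r, s)" if k: "0 \<le> k" and r: "r < ?b" and s: "s < ?b" for k r s
  proof -
    define K where "K = nat k + 1"
    have K0: "0 < K" unfolding K_def by simp
    have commK: "kron (Esub K) (kron (Nlast Mt) (1\<^sub>m Nt)) * kron (1\<^sub>m K) (kron (cmat TFQ) (cmat TFAC))
       = kron (1\<^sub>m K) (kron (cmat TFQ) (cmat TFAC)) * kron (Esub K) (kron (Nlast M) (1\<^sub>m N))"
      using assms(19)[OF K0] unfolding TFQ_def .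
    note YS = Y_simp[OF Qc QDc Ac QtDc Atc TFQc TCQc TFAc TCAc commK]
    note conv = X_conv[OF mu0 Qc QDc Ac QtDc Atc TFQc TCQc TFAc TCAc YS(1) YS(2)]
    have YK: "T_S K M N Q QD A 0 * T_CGC K M N Mt Nt Q A QtD At TFQ TCQ TFAC TCAF 0 = Y K"
      unfolding YS(3) Y_def ..
    have Yc: "Y K \<in> carrier_mat (K*M*N) (K*M*N)"
    proof -
      have S: "kron (Esub K) (kron (Nlast M) (1\<^sub>m N)) \<in> carrier_mat (K*M*N) (K*M*N)" by (rule kronE_carrier) auto
      have P: "kron (1\<^sub>m K) (kron (cmat TCQ) (cmat TCAF)) \<in> carrier_mat (K*M*N) (K*Mt*Nt)" by (rule kron1_carrier) (use TCQc TCAc in auto)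
      have R: "kron (1\<^sub>m K) (kron (cmat TFQ) (cmat TFAC)) \<in> carrier_mat (K*Mt*Nt) (K*M*N)" by (rule kron1_carrier) (use TFQc TFAc in auto)
      show ?thesis unfolding Y_def by (rule mult_carrier_mat[OF S minus_carrier_mat[OF mult_carrier_mat[OF P R]]])
    qed
    have i: "nat k * ?b + r < K*M*N"
    proof -
      have "nat k * ?b + r < nat k * ?b + ?b" using r by simp
      also have "\<dots> = K * ?b" unfolding K_def by simp
      finally show ?thesis by (simp add: mult.assoc)
    qed
    have j: "s < K*M*N"
    proof -
      have "s < 1 * ?b" using s by simp
      also have "\<dots> \<le> K * ?b" using K0 by (intro mult_le_mono1) simp
      finally show ?thesis by (simp add: mult.assoc)
    qed
    have t: "((\<lambda>L. (T_S K M N Q QD A (mu L) * T_CGC K M N Mt Nt Q A QtD At TFQ TCQ TFAC TCAF (mu L)) $$ (nat k * ?b + r, s))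
       \<longlongrightarrow> Y K $$ (nat k * ?b + r, s)) sequentially"
      using mconvD(2)[OF conv, of "nat k * ?b + r" s] i j Yc unfolding YK by auto
    have ev: "eventually (\<lambda>L. (T_S K M N Q QD A (mu L) * T_CGC K M N Mt Nt Q A QtD At TFQ TCQ TFAC TCAF (mu L)) $$ (nat k * ?b + r, s)
       = (if 0 \<le> k then blk ?b (X L) (nat k) 0 else blk ?b (X L) 0 (nat (- k))) $$ (r,s)) sequentially"
      unfolding eventually_sequentially
    proof (intro exI[of _ K] allI impI)
      fix L assume KL: "K \<le> L"
      hence L0: "0 < L" using K0 by simp
      note XT = X_trunc[OF Qc QDc Ac QtDc Atc TFQc TCQc TFAc TCAc KL assms(17)[OF L0] assms(18)[OF L0]]
      have "(if 0 \<le> k then blk ?b (X L) (nat k) 0 else blk ?b (X L) 0 (nat (- k))) $$ (r,s) = X L $$ (nat k * ?b + r, s)"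
        using k r s by (simp add: blk_def)
      also have "\<dots> = trunc (K*M*N) (K*M*N) (X L) $$ (nat k * ?b + r, s)" using i j by simp
      also have "\<dots> = (T_S K M N Q QD A (mu L) * T_CGC K M N Mt Nt Q A QtD At TFQ TCQ TFAC TCAF (mu L)) $$ (nat k * ?b + r, s)"
        unfolding X_def XT(2) ..
      finally show "(T_S K M N Q QD A (mu L) * T_CGC K M N Mt Nt Q A QtD At TFQ TCQ TFAC TCAF (mu L)) $$ (nat k * ?b + r, s)
       = (if 0 \<le> k then blk ?b (X L) (nat k) 0 else blk ?b (X L) 0 (nat (- k))) $$ (r,s)" by simp
    qed
    have "B k $$ (r,s) = lim (\<lambda>L. (if 0 \<le> k then blk ?b (X L) (nat k) 0 else blk ?b (X L) 0 (nat (- k))) $$ (r,s))"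
      unfolding B_def toeplitz_limit_blocks_def using r s by simp
    also have "\<dots> = Y K $$ (nat k * ?b + r, s)" by (rule limI[OF Lim_transform_eventually[OF t ev]])
    finally show ?thesis unfolding K_def .
  qed
  have lim_neg: "B k $$ (r,s) = 0" if k: "k < 0" and r: "r < ?b" and s: "s < ?b" for k r s
  proof -
    define j where "j = nat (- k)"
    have j1: "1 \<le> j" unfolding j_def using k by simp
    have ev: "eventually (\<lambda>L. (if 0 \<le> k then blk ?b (X L) (nat k) 0 else blk ?b (X L) 0 (nat (- k))) $$ (r,s) = 0) sequentially"
      unfolding eventually_sequentially
    proof (intro exI[of _ "j + 1"] allI impI)
      fix L assume jL: "j + 1 \<le> L"
      hence L0: "0 < L" and KL: "1 \<le> L" by auto
      note XT = X_trunc[OF Qc QDc Ac QtDc Atc TFQc TCQc TFAc TCAc KL assms(17)[OF L0] assms(18)[OF L0]]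
      have "(if 0 \<le> k then blk ?b (X L) (nat k) 0 else blk ?b (X L) 0 (nat (- k))) $$ (r,s) = X L $$ (r, j * ?b + s)"
        using k r s unfolding j_def by (simp add: blk_def)
      also have "\<dots> = 0"
      proof -
        have "r < 1*M*N" using r by simp
        moreover have "1*M*N \<le> j * ?b + s"
        proof -
          have "1*(M*N) \<le> j*(M*N)" by (rule mult_le_mono1[OF j1])
          thus ?thesis by linarith
        qed
        moreover have "j * ?b + s < dim_col (X L)"
        proof -
          have "j * ?b + s < j * ?b + ?b" using s by simp
          also have "\<dots> = (j + 1) * ?b" by simp
          also have "\<dots> \<le> L * ?b" using jL by (intro mult_le_mono1)
          finally show ?thesis unfolding X_def XT(3) by (simp add: mult.assoc)
        qed
        ultimately show ?thesis using XT(1)[unfolded cutz_def, rule_format, of r "j * ?b + s"] unfolding X_def by blast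
      qed
      finally show "(if 0 \<le> k then blk ?b (X L) (nat k) 0 else blk ?b (X L) 0 (nat (- k))) $$ (r,s) = 0" .
    qed
    have "B k $$ (r,s) = lim (\<lambda>L. (if 0 \<le> k then blk ?b (X L) (nat k) 0 else blk ?b (X L) 0 (nat (- k))) $$ (r,s))"
      unfolding B_def toeplitz_limit_blocks_def using r s by simp
    also have "\<dots> = 0" by (rule limI[OF tendsto_eventually[OF ev]])
    finally show ?thesis .
  qed
  have Bz: "B k $$ (r,s) = 0" if k: "k \<noteq> 1" and r: "r < ?b" and s: "s < ?b" for k r s
  proof (cases "k < 0")
    case True thus ?thesis using lim_neg r s by simp
  next
    case False
    hence "B k $$ (r,s) = Y (nat k + 1) $$ (nat k * ?b + r, s)" using lim_pos r s by simp
    also have "\<dots> = 0" unfolding Y_def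
      by (rule Y_zero[OF TFQc TCQc TFAc TCAc _ _ r s]) (use k False in auto)
    finally show ?thesis .
  qed
  have B1: "B 1 $$ (r,s) = Y 2 $$ (?b + r, s)" if r: "r < ?b" and s: "s < ?b" for r s
    using lim_pos[of 1 r s] r s by (simp add: numeral_2_eq_2)
  define B1m where "B1m = mat ?b ?b (\<lambda>(r,s). Y 2 $$ (?b + r, s))"
  have sym: "toeplitz_symbol ?b B x = cis x \<cdot>\<^sub>m B1m" for x
  proof (rule eq_matI)
    fix r s assume "r < dim_row (cis x \<cdot>\<^sub>m B1m)" and "s < dim_col (cis x \<cdot>\<^sub>m B1m)"
    hence r: "r < ?b" and s: "s < ?b" unfolding B1m_def by auto
    define f where "f = (\<lambda>k::int. B k $$ (r,s) * cis (real_of_int k * x))"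
    have "infsum f UNIV = infsum f {1}"
      by (rule infsum_cong_neutral) (auto simp: f_def Bz r s)
    also have "\<dots> = B 1 $$ (r,s) * cis x" by (simp add: f_def)
    finally show "toeplitz_symbol ?b B x $$ (r,s) = (cis x \<cdot>\<^sub>m B1m) $$ (r,s)"
      unfolding toeplitz_symbol_def B1m_def using r s B1[OF r s] f_def by (simp add: mult.commute)
  qed (auto simp: toeplitz_symbol_def B1m_def)
  define A' where "A' = mat N N (\<lambda>(i,j). if i < Nt then cmat TFAC $$ (i,j) else 0)"
  have A'c: "A' \<in> carrier_mat N N" unfolding A'_def by simp
  have "det A' = 0"
  proof -
    have "det A' = (\<Sum>p\<in>{p. p permutes {0..<N}}. signof p * (\<Prod>i = 0..<N. A' $$ (i, p i)))"
      by (rule det_def'[OF A'c])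
    also have "\<dots> = 0"
    proof (rule sum.neutral, intro ballI)
      fix p assume p: "p \<in> {p. p permutes {0..<N}}"
      have "N - 1 \<in> {0..<N}" using N0 by simp
      moreover have "A' $$ (N - 1, p (N - 1)) = 0"
      proof -
        have "p (N - 1) < N" using p N0 by (auto simp: permutes_in_image)
        thus ?thesis unfolding A'_def using N0 assms(4) by auto
      qed
      ultimately have "(\<Prod>i = 0..<N. A' $$ (i, p i)) = 0" by (intro prod_zero) auto
      thus "signof p * (\<Prod>i = 0..<N. A' $$ (i, p i)) = 0" by simp
    qed
    finally show ?thesis .
  qed
  then obtain w where w: "w \<in> carrier_vec N" and wnz: "w \<noteq> 0\<^sub>v N" and Aw: "A' *\<^sub>v w = 0\<^sub>v N"
    using det_0_iff_vec_prod_zero[OF A'c] by auto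
  have ker: "cmat TFAC *\<^sub>v w = 0\<^sub>v Nt"
  proof (rule eq_vecI)
    fix i assume "i < dim_vec (0\<^sub>v Nt :: complex vec)"
    hence i: "i < Nt" by simp
    have iN: "i < N" using i assms(4) by simp
    have "(cmat TFAC *\<^sub>v w) $ i = (\<Sum>j<N. cmat TFAC $$ (i,j) * w $ j)" by (rule mmv_sum[OF cmat_carrier[OF TFAc] w i])
    also have "\<dots> = (\<Sum>j<N. A' $$ (i,j) * w $ j)" using i iN unfolding A'_def by (intro sum.cong) auto
    also have "\<dots> = (A' *\<^sub>v w) $ i" by (rule mmv_sum[OF A'c w iN, symmetric])
    also have "\<dots> = 0" using Aw iN by simp
    finally show "(cmat TFAC *\<^sub>v w) $ i = 0\<^sub>v Nt $ i" using i by simp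
  qed (use TFAc in simp)
  have "\<exists>n<N. w $ n \<noteq> 0"
  proof (rule ccontr)
    assume "\<not> (\<exists>n<N. w $ n \<noteq> 0)"
    hence "w = 0\<^sub>v N" using w by (intro eq_vecI) auto
    with wnz show False by simp
  qed
  then obtain n where n: "n < N" and wn: "w $ n \<noteq> 0" by blast
  define v where "v = vec ?b (\<lambda>s. w $ (s mod N))"
  have vc: "v \<in> carrier_vec ?b" unfolding v_def by simp
  have nb: "n < ?b"
  proof -
    have "1*N \<le> M*N" by (rule mult_le_mono1) (use assms(1) in simp)
    thus ?thesis using n by linarith
  qed
  have vnz: "v \<noteq> 0\<^sub>v ?b"
  proof
    assume "v = 0\<^sub>v ?b"
    hence "v $ n = 0" using nb by simp
    thus False unfolding v_def using nb n wn by simp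
  qed
  have B1c: "B1m \<in> carrier_mat ?b ?b" unfolding B1m_def by simp
  have Bv: "B1m *\<^sub>v v = v"
  proof (rule eq_vecI)
    fix r assume "r < dim_vec v"
    hence r: "r < ?b" unfolding v_def by simp
    have "(B1m *\<^sub>v v) $ r = (\<Sum>s<?b. B1m $$ (r,s) * v $ s)" by (rule mmv_sum[OF B1c vc r])
    also have "\<dots> = (\<Sum>s<?b. Y 2 $$ (?b + r, s) * w $ (s mod N))"
      using r unfolding B1m_def v_def by (intro sum.cong) auto
    also have "\<dots> = w $ (r mod N)" unfolding Y_def by (rule Y_eig[OF TFQc TCQc TFAc TCAc w ker r])
    also have "\<dots> = v $ r" using r unfolding v_def by simp
    finally show "(B1m *\<^sub>v v) $ r = v $ r" .
  qed (use B1c vc in auto)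
  have sr: "1 \<le> spectral_radius (toeplitz_symbol ?b B x)" for x
  proof -
    have Sc: "toeplitz_symbol ?b B x \<in> carrier_mat ?b ?b" unfolding toeplitz_symbol_def by simp
    have "toeplitz_symbol ?b B x *\<^sub>v v = cis x \<cdot>\<^sub>v v"
    proof (rule eq_vecI)
      fix r assume "r < dim_vec (cis x \<cdot>\<^sub>v v)"
      hence r: "r < ?b" unfolding v_def by simp
      have "(toeplitz_symbol ?b B x *\<^sub>v v) $ r = (\<Sum>s<?b. (cis x \<cdot>\<^sub>m B1m) $$ (r,s) * v $ s)"
        unfolding sym by (rule mmv_sum[OF smult_carrier_mat[OF B1c] vc r])
      also have "\<dots> = cis x * (\<Sum>s<?b. B1m $$ (r,s) * v $ s)"
        unfolding sum_distrib_left using r B1c by (intro sum.cong) auto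
      also have "(\<Sum>s<?b. B1m $$ (r,s) * v $ s) = (B1m *\<^sub>v v) $ r" by (rule mmv_sum[OF B1c vc r, symmetric])
      also have "\<dots> = v $ r" unfolding Bv ..
      finally show "(toeplitz_symbol ?b B x *\<^sub>v v) $ r = (cis x \<cdot>\<^sub>v v) $ r" using r vc by simp
    qed (use Sc vc in auto)
    hence "eigenvalue (toeplitz_symbol ?b B x) (cis x)"
      unfolding eigenvalue_def eigenvector_def using Sc vc vnz by auto
    hence "cis x \<in> spectrum (toeplitz_symbol ?b B x)" unfolding spectrum_def by simp
    hence "norm (cis x) \<in> norm ` spectrum (toeplitz_symbol ?b B x)" by (rule imageI)
    moreover have "0 < ?b" using assms(1) N0 by simp
    ultimately have "norm (cis x) \<le> spectral_radius (toeplitz_symbol ?b B x)"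
      using spectral_radius_mem_max(2)[OF Sc] by blast
    thus ?thesis by simp
  qed
  have "1 \<le> toeplitz_spectral_radius ?b B"
  proof -
    let ?Mm = "restrict_space lborel {-pi..pi}"
    have sp: "space ?Mm = {-pi..pi}" by simp
    have "emeasure ?Mm (space ?Mm) = emeasure lborel {-pi..pi}"
      unfolding sp by (rule emeasure_restrict_space) auto
    also have "\<dots> = ennreal (2 * pi)" by simp
    finally have "emeasure ?Mm (space ?Mm) \<noteq> 0" by simp
    hence "esssup ?Mm (\<lambda>x. ereal 1) = 1" by (simp add: esssup_const)
    moreover have "esssup ?Mm (\<lambda>x. ereal 1) \<le> esssup ?Mm (\<lambda>x. ereal (spectral_radius (toeplitz_symbol ?b B x)))"
      by (rule esssup_mono) (use sr in auto)
    ultimately show ?thesis unfolding toeplitz_spectral_radius_def by simp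
  qed
  thus ?thesis unfolding B_def X_def Q_def TFQ_def TCQ_def .
qed


end
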